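(* Let $S$ and $T$ be operator systems. If $S$ and $T$ are dualizable, then the operator system coproduct $S\oplus T$ is dualizable.
   Context: Operator systems here are (possibly nonunital) matrix ordered operator spaces admitting a completely isometric complete order embedding into some $B(H)$. The nc quasistate space $\mathcal{QS}(S)=\coprod_n\mathcal{QS}_n(S)$ has $\mathcal{QS}_n(S)$ the completely contractive completely positive maps $S\to M_n$. The coproduct $S\oplus T$ is the vector space $S\oplus T$ with $M_n(S\oplus T)=M_n(S)\oplus M_n(T)$, matrix norms $\|(x,y)\|_{M_n(S\oplus T)}=\sup\{\|\phi_n(x)+\psi_n(y)\|: m\ge1,\ \phi\in\mathcal{QS}_m(S),\ \psi\in\mathcal{QS}_m(T)\}$ and cones $M_n(S\oplus T)^+=M_n(S)^+\oplus M_n(T)^+$ (equivalently, the operator system of continuous affine nc functions on $\mathcal{QS}(S)\times\mathcal{QS}(T)$ vanishing at $(0,0)$). For an operator system $S$, $S^*$ has $M_n(S^* )\cong\mathrm{CB}(S,M_n)$ with cb norm and $M_n(S^* )^+=\mathrm{CP}(S,M_n)$; $S$ is dualizable if there is a linear map $S^*\to B(H)$ that is completely bounded, completely bounded below and a complete order isomorphism onto its range. *)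

theory Defs
  imports "HOL-Analysis.Analysis"
begin

definition l2 :: "('i \<Rightarrow> complex) set" where
  "l2 = {x. (\<lambda>i. (cmod (x i))^2) summable_on UNIV}"

definition l2inner :: "('i \<Rightarrow> complex) \<Rightarrow> ('i \<Rightarrow> complex) \<Rightarrow> complex" where
  "l2inner x y = (\<Sum>\<^sub>\<infinity>i. x i * cnj (y i))"

definition l2norm :: "('i \<Rightarrow> complex) \<Rightarrow> real" where
  "l2norm x = sqrt (\<Sum>\<^sub>\<infinity>i. (cmod (x i))^2)"

text \<open>Bounded operators on l2(I); normalised to be 0 off l2 so that each operator
  has a unique representative.\<close>
definition bop :: "(('i \<Rightarrow> complex) \<Rightarrow> ('i \<Rightarrow> complex)) set" where
  "bop = {T. (\<forall>x\<in>l2. T x \<in> l2)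
        \<and> (\<forall>x\<in>l2. \<forall>y\<in>l2. T (\<lambda>i. x i + y i) = (\<lambda>i. T x i + T y i))
        \<and> (\<forall>c. \<forall>x\<in>l2. T (\<lambda>i. c * x i) = (\<lambda>i. c * T x i))
        \<and> (\<exists>K. \<forall>x\<in>l2. l2norm (T x) \<le> K * l2norm x)
        \<and> (\<forall>x. x \<notin> l2 \<longrightarrow> T x = (\<lambda>i. 0))}"

text \<open>M_n(B(H)) acting on H^n (n-tuples of vectors).\<close>
definition tup_l2 :: "nat \<Rightarrow> (nat \<Rightarrow> 'i \<Rightarrow> complex) set" where
  "tup_l2 n = {u. \<forall>k<n. u k \<in> l2}"

definition tapply :: "nat \<Rightarrow> (nat \<Rightarrow> nat \<Rightarrow> ('i \<Rightarrow> complex) \<Rightarrow> ('i \<Rightarrow> complex))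
    \<Rightarrow> (nat \<Rightarrow> 'i \<Rightarrow> complex) \<Rightarrow> (nat \<Rightarrow> 'i \<Rightarrow> complex)" where
  "tapply n T u = (\<lambda>k i. \<Sum>m<n. T k m (u m) i)"

definition tnorm :: "nat \<Rightarrow> (nat \<Rightarrow> 'i \<Rightarrow> complex) \<Rightarrow> real" where
  "tnorm n u = sqrt (\<Sum>k<n. (l2norm (u k))^2)"

definition tinner :: "nat \<Rightarrow> (nat \<Rightarrow> 'i \<Rightarrow> complex) \<Rightarrow> (nat \<Rightarrow> 'i \<Rightarrow> complex) \<Rightarrow> complex" where
  "tinner n u w = (\<Sum>k<n. l2inner (u k) (w k))"

definition bop_mnorm :: "nat \<Rightarrow> (nat \<Rightarrow> nat \<Rightarrow> ('i \<Rightarrow> complex) \<Rightarrow> ('i \<Rightarrow> complex)) \<Rightarrow> real" where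
  "bop_mnorm n T = (SUP u\<in>{u\<in>tup_l2 n. tnorm n u \<le> 1}. tnorm n (tapply n T u))"

definition bop_mpos :: "nat \<Rightarrow> (nat \<Rightarrow> nat \<Rightarrow> ('i \<Rightarrow> complex) \<Rightarrow> ('i \<Rightarrow> complex)) \<Rightarrow> bool" where
  "bop_mpos n T = (\<forall>u\<in>tup_l2 n. Im (tinner n (tapply n T u) u) = 0 \<and> 0 \<le> Re (tinner n (tapply n T u) u))"

definition cvnorm :: "nat \<Rightarrow> (nat \<Rightarrow> complex) \<Rightarrow> real" where
  "cvnorm n v = sqrt (\<Sum>k<n. (cmod (v k))^2)"

definition cmapply :: "nat \<Rightarrow> (nat \<Rightarrow> nat \<Rightarrow> complex) \<Rightarrow> (nat \<Rightarrow> complex) \<Rightarrow> (nat \<Rightarrow> complex)" where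
  "cmapply n A v = (\<lambda>k. \<Sum>m<n. A k m * v m)"

definition cmnorm :: "nat \<Rightarrow> (nat \<Rightarrow> nat \<Rightarrow> complex) \<Rightarrow> real" where
  "cmnorm n A = (SUP v\<in>{v. cvnorm n v \<le> 1}. cvnorm n (cmapply n A v))"

definition cmpos :: "nat \<Rightarrow> (nat \<Rightarrow> nat \<Rightarrow> complex) \<Rightarrow> bool" where
  "cmpos n A = (\<forall>v. Im (\<Sum>k<n. cnj (v k) * cmapply n A v k) = 0
                  \<and> 0 \<le> Re (\<Sum>k<n. cnj (v k) * cmapply n A v k))"

text \<open>A complex vector space structure on the type 'v (addition from the type class,
  complex scalar multiplication explicit), an involution, matrix norms on M_n('v) and
  matrix cones M_n('v)^+.  An n x n matrix is a function nat => nat => 'v (entries < n used).\<close>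
record 'v mstruct =
  msc   :: "complex \<Rightarrow> 'v \<Rightarrow> 'v"
  minv  :: "'v \<Rightarrow> 'v"
  mnorm :: "nat \<Rightarrow> (nat \<Rightarrow> nat \<Rightarrow> 'v) \<Rightarrow> real"
  mpos  :: "nat \<Rightarrow> (nat \<Rightarrow> nat \<Rightarrow> 'v) set"

definition operator_system :: "'i itself \<Rightarrow> ('v::ab_group_add) mstruct \<Rightarrow> bool" where
  "operator_system _ S \<longleftrightarrow> (\<exists>j :: 'v \<Rightarrow> (('i \<Rightarrow> complex) \<Rightarrow> ('i \<Rightarrow> complex)).
      (\<forall>x. j x \<in> bop) \<and> inj j
    \<and> (\<forall>x y. j (x + y) = (\<lambda>u i. j x u i + j y u i))
    \<and> (\<forall>c x. j (msc S c x) = (\<lambda>u i. c * j x u i))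
    \<and> (\<forall>x. \<forall>u\<in>l2. \<forall>w\<in>l2. l2inner (j x u) w = l2inner u (j (minv S x) w))
    \<and> (\<forall>n\<ge>1. \<forall>X. mnorm S n X = bop_mnorm n (\<lambda>a b. j (X a b)))
    \<and> (\<forall>n\<ge>1. \<forall>X. X \<in> mpos S n \<longleftrightarrow> bop_mpos n (\<lambda>a b. j (X a b))))"

text \<open>Amplification: for phi : V -> M_m and X in M_n(V), phi_n(X) in M_{nm}
  (index p = block * m + entry).\<close>
definition amp :: "nat \<Rightarrow> ('v \<Rightarrow> nat \<Rightarrow> nat \<Rightarrow> complex) \<Rightarrow> (nat \<Rightarrow> nat \<Rightarrow> 'v) \<Rightarrow> (nat \<Rightarrow> nat \<Rightarrow> complex)" where
  "amp m \<phi> X = (\<lambda>p q. \<phi> (X (p div m) (q div m)) (p mod m) (q mod m))"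

definition clin_mat :: "('v::ab_group_add) mstruct \<Rightarrow> ('v \<Rightarrow> nat \<Rightarrow> nat \<Rightarrow> complex) \<Rightarrow> bool" where
  "clin_mat S \<phi> \<longleftrightarrow> (\<forall>x y a b. \<phi> (x + y) a b = \<phi> x a b + \<phi> y a b)
                    \<and> (\<forall>c x a b. \<phi> (msc S c x) a b = c * \<phi> x a b)"

definition QS :: "('v::ab_group_add) mstruct \<Rightarrow> nat \<Rightarrow> ('v \<Rightarrow> nat \<Rightarrow> nat \<Rightarrow> complex) set" where
  "QS S m = {\<phi>. clin_mat S \<phi>
      \<and> (\<forall>n\<ge>1. \<forall>X. cmnorm (n * m) (amp m \<phi> X) \<le> mnorm S n X)
      \<and> (\<forall>n\<ge>1. \<forall>X\<in>mpos S n. cmpos (n * m) (amp m \<phi> X))}"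

definition coprod :: "('a::ab_group_add) mstruct \<Rightarrow> ('b::ab_group_add) mstruct \<Rightarrow> ('a \<times> 'b) mstruct" where
  "coprod S T = \<lparr> msc = (\<lambda>c xy. (msc S c (fst xy), msc T c (snd xy))),
     minv = (\<lambda>xy. (minv S (fst xy), minv T (snd xy))),
     mnorm = (\<lambda>n X. SUP t\<in>{(m, \<phi>, \<psi>). m \<ge> 1 \<and> \<phi> \<in> QS S m \<and> \<psi> \<in> QS T m}.
        (case t of (m, \<phi>, \<psi>) \<Rightarrow>
           cmnorm (n * m) (\<lambda>p q. amp m \<phi> (\<lambda>a b. fst (X a b)) p q
                               + amp m \<psi> (\<lambda>a b. snd (X a b)) p q))),
     mpos = (\<lambda>n. {X. (\<lambda>a b. fst (X a b)) \<in> mpos S n \<and> (\<lambda>a b. snd (X a b)) \<in> mpos T n}) \<rparr>"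

definition clinfun :: "('v::ab_group_add) mstruct \<Rightarrow> ('v \<Rightarrow> complex) \<Rightarrow> bool" where
  "clinfun S f \<longleftrightarrow> (\<forall>x y. f (x + y) = f x + f y) \<and> (\<forall>c x. f (msc S c x) = c * f x)"

text \<open>F in M_n(S^*) corresponds to the map x |-> [F a b x] : S -> M_n.\<close>
definition dual_vals :: "('v::ab_group_add) mstruct \<Rightarrow> nat \<Rightarrow> (nat \<Rightarrow> nat \<Rightarrow> 'v \<Rightarrow> complex) \<Rightarrow> real set" where
  "dual_vals S n F = {cmnorm (m * n) (amp n (\<lambda>x a b. F a b x) X) | m X. m \<ge> 1 \<and> mnorm S m X \<le> 1}"

definition dual_mat :: "('v::ab_group_add) mstruct \<Rightarrow> nat \<Rightarrow> (nat \<Rightarrow> nat \<Rightarrow> 'v \<Rightarrow> complex) \<Rightarrow> bool" where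
  "dual_mat S n F \<longleftrightarrow> (\<forall>a<n. \<forall>b<n. clinfun S (F a b)) \<and> bdd_above (dual_vals S n F)"

definition dual_mnorm :: "('v::ab_group_add) mstruct \<Rightarrow> nat \<Rightarrow> (nat \<Rightarrow> nat \<Rightarrow> 'v \<Rightarrow> complex) \<Rightarrow> real" where
  "dual_mnorm S n F = Sup (dual_vals S n F)"

definition dual_mpos :: "('v::ab_group_add) mstruct \<Rightarrow> nat \<Rightarrow> (nat \<Rightarrow> nat \<Rightarrow> 'v \<Rightarrow> complex) \<Rightarrow> bool" where
  "dual_mpos S n F \<longleftrightarrow> (\<forall>m\<ge>1. \<forall>X\<in>mpos S m. cmpos (m * n) (amp n (\<lambda>x a b. F a b x) X))"

definition dualizable :: "'h itself \<Rightarrow> ('v::ab_group_add) mstruct \<Rightarrow> bool" where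
  "dualizable _ S \<longleftrightarrow> (\<exists>\<Phi> :: ('v \<Rightarrow> complex) \<Rightarrow> (('h \<Rightarrow> complex) \<Rightarrow> ('h \<Rightarrow> complex)).
      (\<forall>f. dual_mat S 1 (\<lambda>_ _. f) \<longrightarrow> \<Phi> f \<in> bop)
    \<and> (\<forall>f g. dual_mat S 1 (\<lambda>_ _. f) \<and> dual_mat S 1 (\<lambda>_ _. g)
          \<longrightarrow> \<Phi> (\<lambda>x. f x + g x) = (\<lambda>u i. \<Phi> f u i + \<Phi> g u i))
    \<and> (\<forall>c f. dual_mat S 1 (\<lambda>_ _. f) \<longrightarrow> \<Phi> (\<lambda>x. c * f x) = (\<lambda>u i. c * \<Phi> f u i))
    \<and> (\<exists>K. \<forall>n\<ge>1. \<forall>F. dual_mat S n F \<longrightarrow>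
          bop_mnorm n (\<lambda>a b. \<Phi> (F a b)) \<le> K * dual_mnorm S n F)
    \<and> (\<exists>c>0. \<forall>n\<ge>1. \<forall>F. dual_mat S n F \<longrightarrow>
          c * dual_mnorm S n F \<le> bop_mnorm n (\<lambda>a b. \<Phi> (F a b)))
    \<and> (\<forall>n\<ge>1. \<forall>F. dual_mat S n F \<longrightarrow>
          (dual_mpos S n F \<longleftrightarrow> bop_mpos n (\<lambda>a b. \<Phi> (F a b)))))"

end

theory Submission
  imports Defs
begin

abbreviation sq :: "('i \<Rightarrow> complex) \<Rightarrow> 'i \<Rightarrow> real" where "sq x \<equiv> (\<lambda>i. (cmod (x i))^2)"

lemma l2norm_sq: "(l2norm x)^2 = (\<Sum>\<^sub>\<infinity>i. (cmod (x i))^2)"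
  unfolding l2norm_def by (simp add: infsum_nonneg)

lemma l2norm_nonneg: "0 \<le> l2norm x"
  unfolding l2norm_def by (simp add: infsum_nonneg)

lemma l2_fin_le:
  assumes "x \<in> l2" "finite F"
  shows "(\<Sum>i\<in>F. (cmod (x i))^2) \<le> (l2norm x)^2"
proof -
  have "(\<Sum>i\<in>F. (cmod (x i))^2) = (\<Sum>\<^sub>\<infinity>i\<in>F. (cmod (x i))^2)" using assms by simp
  also have "\<dots> \<le> (\<Sum>\<^sub>\<infinity>i. (cmod (x i))^2)"
    apply (rule infsum_mono_neutral) using assms unfolding l2_def by auto
  finally show ?thesis by (simp add: l2norm_sq)
qed

lemma l2_by_bound:
  assumes "\<And>F. finite F \<Longrightarrow> (\<Sum>i\<in>F. (cmod (x i))^2) \<le> B^2" "0 \<le> B"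
  shows "x \<in> l2" "l2norm x \<le> B"
proof -
  have s: "(\<lambda>i. (cmod (x i))^2) summable_on UNIV"
    apply (rule nonneg_bdd_above_summable_on)
     apply simp
    apply (rule bdd_aboveI[where M="B^2"])
    apply clarify
    apply (rule assms(1))
    apply simp
    done
  then show "x \<in> l2" unfolding l2_def by simp
  have "(\<Sum>\<^sub>\<infinity>i. (cmod (x i))^2) \<le> B^2"
    apply (rule infsum_le_finite_sums[OF s])
    apply (rule assms(1))
    apply assumption
    done
  then have "sqrt (\<Sum>\<^sub>\<infinity>i. (cmod (x i))^2) \<le> sqrt (B^2)" by (rule real_sqrt_le_mono)
  then show "l2norm x \<le> B" unfolding l2norm_def using assms(2) by simp
qed

lemma l2_approx:
  assumes "x \<in> l2" "e > 0"
  shows "\<exists>F. finite F \<and> (l2norm x)^2 - e < (\<Sum>i\<in>F. (cmod (x i))^2)"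
proof -
  have s: "(\<lambda>i. (cmod (x i))^2) summable_on UNIV" using assms unfolding l2_def by simp
  obtain F where F: "finite F" "dist (sum (\<lambda>i. (cmod (x i))^2) F) (\<Sum>\<^sub>\<infinity>i. (cmod (x i))^2) \<le> e/2"
    using infsum_finite_approximation[OF s, of "e/2"] assms by auto
  then have "(\<Sum>\<^sub>\<infinity>i. (cmod (x i))^2) - e < sum (\<lambda>i. (cmod (x i))^2) F"
    using F(2) assms(2) unfolding dist_real_def abs_le_iff by linarith
  then show ?thesis using F(1) by (auto simp: l2norm_sq)
qed

lemma sum_sq_mono:
  assumes "finite G" "F \<subseteq> G"
  shows "(\<Sum>i\<in>F. (cmod (x i))^2) \<le> (\<Sum>i\<in>G. (cmod (x i))^2)"
  by (rule sum_mono2) (use assms in auto)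

lemma sqrt_le_sq: "sqrt s \<le> B \<Longrightarrow> 0 \<le> s \<Longrightarrow> s \<le> B^2"
proof -
  assume a: "sqrt s \<le> B" "0 \<le> s"
  have "(sqrt s)^2 \<le> B^2" by (rule power_mono[OF a(1)]) (simp add: a(2))
  then show ?thesis using a(2) by simp
qed

lemma fin_tri:
  fixes x y :: "'i \<Rightarrow> complex"
  assumes "finite F"
  shows "sqrt (\<Sum>i\<in>F. (cmod (x i + y i))^2) \<le> sqrt (\<Sum>i\<in>F. (cmod (x i))^2) + sqrt (\<Sum>i\<in>F. (cmod (y i))^2)"
proof -
  have "sqrt (\<Sum>i\<in>F. (cmod (x i + y i))^2) = L2_set (\<lambda>i. cmod (x i + y i)) F" by (simp add: L2_set_def)
  also have "\<dots> \<le> L2_set (\<lambda>i. cmod (x i) + cmod (y i)) F"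
    by (rule L2_set_mono) (auto simp: norm_triangle_ineq)
  also have "\<dots> \<le> L2_set (\<lambda>i. cmod (x i)) F + L2_set (\<lambda>i. cmod (y i)) F"
    by (rule L2_set_triangle_ineq)
  finally show ?thesis by (simp add: L2_set_def)
qed

lemma l2_add:
  assumes "x \<in> l2" "y \<in> l2"
  shows "(\<lambda>i. x i + y i) \<in> l2" "l2norm (\<lambda>i. x i + y i) \<le> l2norm x + l2norm y"
proof -
  have "\<And>F. finite F \<Longrightarrow> (\<Sum>i\<in>F. (cmod (x i + y i))^2) \<le> (l2norm x + l2norm y)^2"
  proof -
    fix F :: "'a set" assume F: "finite F"
    have a: "sqrt (\<Sum>i\<in>F. (cmod (x i))^2) \<le> l2norm x"
      using real_sqrt_le_mono[OF l2_fin_le[OF assms(1) F]] l2norm_nonneg[of x] by simp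
    have b: "sqrt (\<Sum>i\<in>F. (cmod (y i))^2) \<le> l2norm y"
      using real_sqrt_le_mono[OF l2_fin_le[OF assms(2) F]] l2norm_nonneg[of y] by simp
    have "sqrt (\<Sum>i\<in>F. (cmod (x i + y i))^2) \<le> l2norm x + l2norm y"
      using fin_tri[OF F, of x y] a b by linarith
    then show "(\<Sum>i\<in>F. (cmod (x i + y i))^2) \<le> (l2norm x + l2norm y)^2"
      by (rule sqrt_le_sq) (simp add: sum_nonneg)
  qed
  note B = this
  have P: "0 \<le> l2norm x + l2norm y" by (simp add: l2norm_nonneg add_nonneg_nonneg)
  show "(\<lambda>i. x i + y i) \<in> l2" by (rule l2_by_bound(1)[OF B P])
  show "l2norm (\<lambda>i. x i + y i) \<le> l2norm x + l2norm y" by (rule l2_by_bound(2)[OF B P])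
qed

lemma l2_scale:
  assumes "x \<in> l2"
  shows "(\<lambda>i. c * x i) \<in> l2" "l2norm (\<lambda>i. c * x i) = cmod c * l2norm x"
proof -
  have "(\<lambda>i. (cmod (c * x i))^2) = (\<lambda>i. (cmod c)^2 * (cmod (x i))^2)" by (simp add: norm_mult power_mult_distrib)
  moreover have "(\<lambda>i. (cmod c)^2 * (cmod (x i))^2) summable_on UNIV"
    using assms unfolding l2_def by (intro summable_on_cmult_right) auto
  ultimately show "(\<lambda>i. c * x i) \<in> l2" unfolding l2_def by simp
  have "(\<Sum>\<^sub>\<infinity>i. (cmod (c * x i))^2) = (cmod c)^2 * (\<Sum>\<^sub>\<infinity>i. (cmod (x i))^2)"
    by (simp add: norm_mult power_mult_distrib infsum_cmult_right')
  then show "l2norm (\<lambda>i. c * x i) = cmod c * l2norm x"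
    unfolding l2norm_def by (simp add: real_sqrt_mult)
qed

lemma l2_zero: "(\<lambda>i. 0) \<in> l2" "l2norm (\<lambda>i. 0) = 0"
  unfolding l2_def l2norm_def by auto



lemma UNIV_sum_split: "(UNIV :: ('a + 'b) set) = range Inl \<union> range Inr"
  by (rule set_eqI, case_tac x, auto)

lemma summable_Inl:
  fixes f :: "'a + 'b \<Rightarrow> 'c::banach"
  assumes "f summable_on UNIV"
  shows "(f \<circ> Inl) summable_on UNIV" "(f \<circ> Inr) summable_on UNIV"
proof -
  have "f summable_on range Inl" by (rule summable_on_subset_banach[OF assms]) simp
  then show "(f \<circ> Inl) summable_on UNIV" by (simp add: summable_on_reindex)
  have "f summable_on range Inr" by (rule summable_on_subset_banach[OF assms]) simp
  then show "(f \<circ> Inr) summable_on UNIV" by (simp add: summable_on_reindex)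
qed

lemma summable_sum_split:
  fixes f :: "'a + 'b \<Rightarrow> 'c::banach"
  assumes "(f \<circ> Inl) summable_on UNIV" "(f \<circ> Inr) summable_on UNIV"
  shows "f summable_on UNIV" "infsum f UNIV = infsum (f \<circ> Inl) UNIV + infsum (f \<circ> Inr) UNIV"
proof -
  have a: "f summable_on range Inl" using assms(1) by (simp add: summable_on_reindex)
  have b: "f summable_on range Inr" using assms(2) by (simp add: summable_on_reindex)
  have d: "range Inl \<inter> range Inr = {}" by auto
  show "f summable_on UNIV" using summable_on_Un_disjoint[OF a b d] UNIV_sum_split by metis
  have "infsum f UNIV = infsum f (range Inl) + infsum f (range Inr)"
    using infsum_Un_disjoint[OF a b d] UNIV_sum_split by metis
  then show "infsum f UNIV = infsum (f \<circ> Inl) UNIV + infsum (f \<circ> Inr) UNIV"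
    by (simp add: infsum_reindex)
qed

lemma l2_case_sum:
  "case_sum x y \<in> l2 \<longleftrightarrow> x \<in> l2 \<and> y \<in> l2"
proof -
  have e1: "(\<lambda>i. (cmod (case_sum x y i))^2) \<circ> Inl = (\<lambda>i. (cmod (x i))^2)" by (simp add: o_def)
  have e2: "(\<lambda>i. (cmod (case_sum x y i))^2) \<circ> Inr = (\<lambda>i. (cmod (y i))^2)" by (simp add: o_def)
  show ?thesis unfolding l2_def
    using summable_Inl[of "\<lambda>i. (cmod (case_sum x y i))^2"]
      summable_sum_split(1)[of "\<lambda>i. (cmod (case_sum x y i))^2"] e1 e2 by auto
qed

lemma l2norm_case_sum:
  assumes "x \<in> l2" "y \<in> l2"
  shows "(l2norm (case_sum x y))^2 = (l2norm x)^2 + (l2norm y)^2"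
proof -
  have e1: "(\<lambda>i. (cmod (case_sum x y i))^2) \<circ> Inl = (\<lambda>i. (cmod (x i))^2)" by (simp add: o_def)
  have e2: "(\<lambda>i. (cmod (case_sum x y i))^2) \<circ> Inr = (\<lambda>i. (cmod (y i))^2)" by (simp add: o_def)
  show ?thesis unfolding l2norm_sq
    using summable_sum_split(2)[of "\<lambda>i. (cmod (case_sum x y i))^2"] e1 e2 assms unfolding l2_def by auto
qed

lemma case_sum_eta: "case_sum (z \<circ> Inl) (z \<circ> Inr) = z"
  by (rule ext) (simp split: sum.split)

lemma l2_split: "z \<in> l2 \<longleftrightarrow> z \<circ> Inl \<in> l2 \<and> z \<circ> Inr \<in> l2"
  using l2_case_sum[of "z \<circ> Inl" "z \<circ> Inr"] by (simp add: case_sum_eta)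

lemma l2inner_summable:
  assumes "x \<in> l2" "y \<in> l2"
  shows "(\<lambda>i. x i * cnj (y i)) summable_on UNIV"
proof -
  have s: "(\<lambda>i. (cmod (x i))^2 + (cmod (y i))^2) summable_on UNIV"
    using assms unfolding l2_def by (intro summable_on_add) auto
  have le: "norm (x i * cnj (y i)) \<le> (cmod (x i))^2 + (cmod (y i))^2" for i
  proof -
    have "norm (x i * cnj (y i)) = cmod (x i) * cmod (y i)" by (simp add: norm_mult)
    also have "\<dots> \<le> (cmod (x i))^2 + (cmod (y i))^2"
      using sum_squares_bound[of "cmod (x i)" "cmod (y i)"] norm_ge_zero[of "x i"] norm_ge_zero[of "y i"]
        mult_nonneg_nonneg[of "cmod (x i)" "cmod (y i)"] by linarith
    finally show ?thesis .
  qed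
  have "(\<lambda>i. norm (x i * cnj (y i))) summable_on UNIV"
    by (rule summable_on_comparison_test[OF s]) (use le in auto)
  then show ?thesis by (rule abs_summable_summable)
qed

lemma l2inner_case_sum:
  assumes "a \<in> l2" "b \<in> l2" "c \<in> l2" "d \<in> l2"
  shows "l2inner (case_sum a b) (case_sum c d) = l2inner a c + l2inner b d"
proof -
  have e1: "(\<lambda>i. case_sum a b i * cnj (case_sum c d i)) \<circ> Inl = (\<lambda>i. a i * cnj (c i))" by (simp add: o_def)
  have e2: "(\<lambda>i. case_sum a b i * cnj (case_sum c d i)) \<circ> Inr = (\<lambda>i. b i * cnj (d i))" by (simp add: o_def)
  show ?thesis unfolding l2inner_def
    using summable_sum_split(2)[of "\<lambda>i. case_sum a b i * cnj (case_sum c d i)"] e1 e2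
      l2inner_summable[OF assms(1,3)] l2inner_summable[OF assms(2,4)] by simp
qed



lemma cvnorm_L2: "cvnorm n v = L2_set (\<lambda>k. cmod (v k)) {..<n}"
  by (simp add: cvnorm_def L2_set_def)

lemma cvnorm_nonneg: "0 \<le> cvnorm n v"
  by (simp add: cvnorm_def sum_nonneg)

lemma cvnorm_tri: "cvnorm n (\<lambda>k. a k + b k) \<le> cvnorm n a + cvnorm n b"
  unfolding cvnorm_def by (rule fin_tri) simp

lemma cvnorm_comp: "k < n \<Longrightarrow> cmod (v k) \<le> cvnorm n v"
  unfolding cvnorm_L2 by (rule member_le_L2_set) auto

lemma cmapply_add: "cmapply n (\<lambda>p q. A p q + B p q) v = (\<lambda>k. cmapply n A v k + cmapply n B v k)"
  by (simp add: cmapply_def sum.distrib distrib_right)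

lemma cmnorm_bdd: "bdd_above ((\<lambda>v. cvnorm n (cmapply n A v)) ` {v. cvnorm n v \<le> 1})"
proof (rule bdd_aboveI[where M="\<Sum>k<n. \<Sum>m<n. cmod (A k m)"])
  fix y assume "y \<in> (\<lambda>v. cvnorm n (cmapply n A v)) ` {v. cvnorm n v \<le> 1}"
  then obtain v where v: "cvnorm n v \<le> 1" and y: "y = cvnorm n (cmapply n A v)" by auto
  have "y = L2_set (\<lambda>k. cmod (cmapply n A v k)) {..<n}" by (simp add: y cvnorm_L2)
  also have "\<dots> \<le> (\<Sum>k<n. cmod (cmapply n A v k))" by (rule L2_set_le_sum) simp
  also have "\<dots> \<le> (\<Sum>k<n. \<Sum>m<n. cmod (A k m))"
  proof (rule sum_mono)
    fix k assume "k \<in> {..<n}"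
    have "cmod (cmapply n A v k) \<le> (\<Sum>m<n. cmod (A k m * v m))"
      unfolding cmapply_def by (rule norm_sum)
    also have "\<dots> \<le> (\<Sum>m<n. cmod (A k m))"
    proof (rule sum_mono)
      fix m assume "m \<in> {..<n}"
      then have "cmod (v m) \<le> 1" using cvnorm_comp[of m n v] v by simp
      then show "cmod (A k m * v m) \<le> cmod (A k m)"
        by (simp add: norm_mult mult_left_le)
    qed
    finally show "cmod (cmapply n A v k) \<le> (\<Sum>m<n. cmod (A k m))" .
  qed
  finally show "y \<le> (\<Sum>k<n. \<Sum>m<n. cmod (A k m))" .
qed

lemma cmnorm_ge: "cvnorm n v \<le> 1 \<Longrightarrow> cvnorm n (cmapply n A v) \<le> cmnorm n A"
  unfolding cmnorm_def by (rule cSUP_upper[OF _ cmnorm_bdd]) simp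

lemma cvnorm_zero: "cvnorm n (\<lambda>k. 0) = 0"
  by (simp add: cvnorm_def)

lemma cmnorm_le:
  assumes "\<And>v. cvnorm n v \<le> 1 \<Longrightarrow> cvnorm n (cmapply n A v) \<le> B"
  shows "cmnorm n A \<le> B"
  unfolding cmnorm_def
proof (rule cSUP_least)
  have "(\<lambda>k. 0) \<in> {v. cvnorm n v \<le> 1}" using cvnorm_zero[of n] by simp
  then show "{v. cvnorm n v \<le> 1} \<noteq> {}" by blast
  fix v assume "v \<in> {v. cvnorm n v \<le> 1}"
  then show "cvnorm n (cmapply n A v) \<le> B" using assms by simp
qed

lemma cmnorm_nonneg: "0 \<le> cmnorm n A"
  using cmnorm_ge[of n "\<lambda>k. 0" A] cvnorm_zero[of n] cvnorm_nonneg[of n "cmapply n A (\<lambda>k. 0)"] by simp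

lemma cmnorm_add: "cmnorm n (\<lambda>p q. A p q + B p q) \<le> cmnorm n A + cmnorm n B"
proof (rule cmnorm_le)
  fix v assume v: "cvnorm n v \<le> 1"
  have "cvnorm n (cmapply n (\<lambda>p q. A p q + B p q) v) \<le> cvnorm n (cmapply n A v) + cvnorm n (cmapply n B v)"
    unfolding cmapply_add by (rule cvnorm_tri)
  also have "\<dots> \<le> cmnorm n A + cmnorm n B"
    using cmnorm_ge[OF v, of A] cmnorm_ge[OF v, of B] by linarith
  finally show "cvnorm n (cmapply n (\<lambda>p q. A p q + B p q) v) \<le> cmnorm n A + cmnorm n B" .
qed

lemma cmnorm_zero: "cmnorm n (\<lambda>p q. 0) = 0"
proof -
  have "cmnorm n (\<lambda>p q. 0) \<le> 0"
    by (rule cmnorm_le) (simp add: cmapply_def cvnorm_zero)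
  then show ?thesis using cmnorm_nonneg[of n "\<lambda>p q. 0"] by linarith
qed

lemma cmpos_add: "cmpos n A \<Longrightarrow> cmpos n B \<Longrightarrow> cmpos n (\<lambda>p q. A p q + B p q)"
  unfolding cmpos_def cmapply_add by (simp add: distrib_left sum.distrib)

lemma cmpos_zero: "cmpos n (\<lambda>p q. 0)"
  unfolding cmpos_def by (simp add: cmapply_def)



lemma bop_l2: "T \<in> bop \<Longrightarrow> x \<in> l2 \<Longrightarrow> T x \<in> l2"
  unfolding bop_def by blast

lemma bop_add: "T \<in> bop \<Longrightarrow> x \<in> l2 \<Longrightarrow> y \<in> l2 \<Longrightarrow> T (\<lambda>i. x i + y i) = (\<lambda>i. T x i + T y i)"
  unfolding bop_def by blast

lemma bop_scale: "T \<in> bop \<Longrightarrow> x \<in> l2 \<Longrightarrow> T (\<lambda>i. c * x i) = (\<lambda>i. c * T x i)"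
  unfolding bop_def by blast

lemma bop_off: "T \<in> bop \<Longrightarrow> x \<notin> l2 \<Longrightarrow> T x = (\<lambda>i. 0)"
  unfolding bop_def by blast

lemma bop_zero: assumes "T \<in> bop" shows "T (\<lambda>i. 0) = (\<lambda>i. 0)"
proof -
  have "T (\<lambda>i. 0 * (\<lambda>i. 0) i) = (\<lambda>i. 0 * T (\<lambda>i. 0) i)"
    by (rule bop_scale[OF assms l2_zero(1)])
  then show ?thesis by simp
qed

lemma bop_bound:
  fixes T :: "('i \<Rightarrow> complex) \<Rightarrow> ('i \<Rightarrow> complex)"
  assumes "T \<in> bop"
  shows "\<exists>K\<ge>0. \<forall>x\<in>l2. l2norm (T x) \<le> K * l2norm x"
proof -
  obtain K where K: "\<forall>x\<in>l2. l2norm (T x) \<le> K * l2norm x" using assms unfolding bop_def by blast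
  have "\<forall>x\<in>l2. l2norm (T x) \<le> max K 0 * l2norm x"
  proof
    fix x :: "'i \<Rightarrow> complex" assume "x \<in> l2"
    then have "l2norm (T x) \<le> K * l2norm x" using K by blast
    also have "\<dots> \<le> max K 0 * l2norm x" by (rule mult_right_mono) (auto simp: l2norm_nonneg)
    finally show "l2norm (T x) \<le> max K 0 * l2norm x" .
  qed
  then show ?thesis by (intro exI[of _ "max K 0"]) simp
qed

lemma l2_sum:
  assumes "finite Q" "\<And>q. q \<in> Q \<Longrightarrow> f q \<in> l2"
  shows "(\<lambda>i. \<Sum>q\<in>Q. f q i) \<in> l2 \<and> l2norm (\<lambda>i. \<Sum>q\<in>Q. f q i) \<le> (\<Sum>q\<in>Q. l2norm (f q))"
  using assms
proof (induction Q rule: finite_induct)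
  case empty
  then show ?case by (simp add: l2_zero)
next
  case (insert q Q)
  have fq: "f q \<in> l2" using insert.prems by simp
  have IH: "(\<lambda>i. \<Sum>q\<in>Q. f q i) \<in> l2 \<and> l2norm (\<lambda>i. \<Sum>q\<in>Q. f q i) \<le> (\<Sum>q\<in>Q. l2norm (f q))"
    using insert.IH insert.prems by simp
  have e: "(\<lambda>i. \<Sum>q\<in>insert q Q. f q i) = (\<lambda>i. f q i + (\<Sum>q\<in>Q. f q i))"
    using insert.hyps by simp
  show ?case unfolding e using l2_add[OF fq IH[THEN conjunct1]] IH insert.hyps by simp
qed

lemma bop_sum:
  assumes "T \<in> bop" "finite Q" "\<And>q. q \<in> Q \<Longrightarrow> e q \<in> l2"
  shows "T (\<lambda>i. \<Sum>q\<in>Q. c q * e q i) = (\<lambda>i. \<Sum>q\<in>Q. c q * T (e q) i)"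
  using assms(2,3)
proof (induction Q rule: finite_induct)
  case empty
  then show ?case using bop_zero[OF assms(1)] by simp
next
  case (insert q Q)
  have eq: "e q \<in> l2" using insert.prems by simp
  have "\<And>q'. q' \<in> Q \<Longrightarrow> (\<lambda>i. c q' * e q' i) \<in> l2" using insert.prems by (simp add: l2_scale(1))
  then have s: "(\<lambda>i. \<Sum>q\<in>Q. c q * e q i) \<in> l2"
    using l2_sum[of Q "\<lambda>q i. c q * e q i"] insert.hyps(1) by blast
  have e: "(\<lambda>i. \<Sum>q\<in>insert q Q. c q * e q i) = (\<lambda>i. c q * e q i + (\<Sum>q\<in>Q. c q * e q i))"
    using insert.hyps by simp
  have "T (\<lambda>i. c q * e q i + (\<Sum>q\<in>Q. c q * e q i)) = (\<lambda>i. T (\<lambda>i. c q * e q i) i + T (\<lambda>i. \<Sum>q\<in>Q. c q * e q i) i)"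
    by (rule bop_add[OF assms(1) l2_scale(1)[OF eq] s])
  also have "\<dots> = (\<lambda>i. c q * T (e q) i + (\<Sum>q\<in>Q. c q * T (e q) i))"
    using bop_scale[OF assms(1) eq] insert.IH insert.prems by simp
  finally show ?case unfolding e using insert.hyps by simp
qed

lemma bop_diff:
  assumes "T \<in> bop" "x \<in> l2" "y \<in> l2"
  shows "T (\<lambda>i. x i - y i) = (\<lambda>i. T x i - T y i)"
proof -
  have "T (\<lambda>i. x i - y i) = T (\<lambda>i. x i + (-1) * y i)" by simp
  also have "\<dots> = (\<lambda>i. T x i + T (\<lambda>i. (-1) * y i) i)"
    by (rule bop_add[OF assms(1,2) l2_scale(1)[OF assms(3)]])
  also have "\<dots> = (\<lambda>i. T x i + (-1) * T y i)" using bop_scale[OF assms(1,3), of "-1"] by simp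
  finally show ?thesis by simp
qed

lemma l2_diff: "x \<in> l2 \<Longrightarrow> y \<in> l2 \<Longrightarrow> (\<lambda>i. x i - y i) \<in> l2"
  using l2_add(1)[of x "\<lambda>i. (-1) * y i"] l2_scale(1)[of y "-1"] by simp

lemma tnorm_L2: "tnorm n u = L2_set (\<lambda>k. l2norm (u k)) {..<n}"
  by (simp add: tnorm_def L2_set_def)

lemma tnorm_nonneg: "0 \<le> tnorm n u"
  by (simp add: tnorm_def sum_nonneg)

lemma l2norm_le_tnorm: "k < n \<Longrightarrow> l2norm (u k) \<le> tnorm n u"
  unfolding tnorm_L2 by (rule member_le_L2_set) (auto simp: l2norm_nonneg)

lemma tapply_l2:
  assumes "\<And>a b. a < n \<Longrightarrow> b < n \<Longrightarrow> T a b \<in> bop" "u \<in> tup_l2 n"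
  shows "tapply n T u \<in> tup_l2 n"
  unfolding tup_l2_def tapply_def
proof (clarify)
  fix k assume k: "k < n"
  have "\<And>m. m \<in> {..<n} \<Longrightarrow> T k m (u m) \<in> l2" using assms k bop_l2 unfolding tup_l2_def by blast
  then show "(\<lambda>i. \<Sum>m<n. T k m (u m) i) \<in> l2"
    using l2_sum[of "{..<n}" "\<lambda>m. T k m (u m)"] by blast
qed

lemma tup_bound:
  fixes T :: "nat \<Rightarrow> nat \<Rightarrow> ('i \<Rightarrow> complex) \<Rightarrow> ('i \<Rightarrow> complex)"
  assumes "\<And>a b. a < n \<Longrightarrow> b < n \<Longrightarrow> T a b \<in> bop"
  shows "\<exists>K\<ge>0. \<forall>u\<in>tup_l2 n. tnorm n (tapply n T u) \<le> K * tnorm n u"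
proof -
  have "\<forall>p. \<exists>K. fst p < n \<and> snd p < n \<longrightarrow> K \<ge> 0 \<and> (\<forall>x\<in>l2. l2norm (T (fst p) (snd p) x) \<le> K * l2norm x)"
  proof
    fix p :: "nat \<times> nat"
    show "\<exists>K. fst p < n \<and> snd p < n \<longrightarrow> K \<ge> 0 \<and> (\<forall>x\<in>l2. l2norm (T (fst p) (snd p) x) \<le> K * l2norm x)"
    proof (cases "fst p < n \<and> snd p < n")
      case True
      then have "T (fst p) (snd p) \<in> bop" using assms by blast
      then obtain K where "K \<ge> 0 \<and> (\<forall>x\<in>l2. l2norm (T (fst p) (snd p) x) \<le> K * l2norm x)"
        using bop_bound by blast
      then show ?thesis by blast
    next
      case False
      then show ?thesis by blast
    qed
  qed
  from choice[OF this] obtain Kp where Kp: "\<forall>p. fst p < n \<and> snd p < n \<longrightarrow> Kp p \<ge> 0 \<and> (\<forall>x\<in>l2. l2norm (T (fst p) (snd p) x) \<le> Kp p * l2norm x)"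
    by blast
  define Kf where "Kf a b = Kp (a, b)" for a b
  have Kf: "\<And>a b. a < n \<Longrightarrow> b < n \<Longrightarrow> Kf a b \<ge> 0 \<and> (\<forall>x\<in>l2. l2norm (T a b x) \<le> Kf a b * l2norm x)"
    unfolding Kf_def using Kp by fastforce
  define K where "K = (\<Sum>a<n. \<Sum>b<n. Kf a b)"
  have K0: "K \<ge> 0" unfolding K_def using Kf by (intro sum_nonneg) auto
  have "\<forall>u\<in>tup_l2 n. tnorm n (tapply n T u) \<le> K * tnorm n u"
  proof
    fix u :: "nat \<Rightarrow> 'i \<Rightarrow> complex" assume u: "u \<in> tup_l2 n"
    have ul: "\<And>m. m < n \<Longrightarrow> u m \<in> l2" using u unfolding tup_l2_def by blast
    have "tnorm n (tapply n T u) \<le> (\<Sum>a<n. l2norm (tapply n T u a))"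
      unfolding tnorm_L2 by (rule L2_set_le_sum) (simp add: l2norm_nonneg)
    also have "\<dots> \<le> (\<Sum>a<n. \<Sum>b<n. Kf a b * tnorm n u)"
    proof (rule sum_mono)
      fix a assume a: "a \<in> {..<n}"
      have "\<And>b. b \<in> {..<n} \<Longrightarrow> T a b (u b) \<in> l2" using assms a bop_l2 ul by blast
      then have "l2norm (tapply n T u a) \<le> (\<Sum>b<n. l2norm (T a b (u b)))"
        unfolding tapply_def using l2_sum[of "{..<n}" "\<lambda>b. T a b (u b)"] by blast
      also have "\<dots> \<le> (\<Sum>b<n. Kf a b * tnorm n u)"
      proof (rule sum_mono)
        fix b assume b: "b \<in> {..<n}"
        have "l2norm (T a b (u b)) \<le> Kf a b * l2norm (u b)" using Kf[of a b] a b ul[of b] by auto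
        also have "\<dots> \<le> Kf a b * tnorm n u"
          by (rule mult_left_mono) (use l2norm_le_tnorm[of b n u] b Kf[of a b] a in auto)
        finally show "l2norm (T a b (u b)) \<le> Kf a b * tnorm n u" .
      qed
      finally show "l2norm (tapply n T u a) \<le> (\<Sum>b<n. Kf a b * tnorm n u)" .
    qed
    also have "\<dots> = K * tnorm n u" unfolding K_def by (simp add: sum_distrib_right)
    finally show "tnorm n (tapply n T u) \<le> K * tnorm n u" .
  qed
  then show ?thesis using K0 by blast
qed

lemma zero_tup: "(\<lambda>k i. 0) \<in> tup_l2 n" "tnorm n (\<lambda>k i. 0) = 0"
  by (simp_all add: tup_l2_def tnorm_def l2_zero)

lemma bop_mnorm_bdd:
  fixes T :: "nat \<Rightarrow> nat \<Rightarrow> ('i \<Rightarrow> complex) \<Rightarrow> ('i \<Rightarrow> complex)"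
  assumes "\<And>a b. a < n \<Longrightarrow> b < n \<Longrightarrow> T a b \<in> bop"
  shows "bdd_above ((\<lambda>u. tnorm n (tapply n T u)) ` {u\<in>tup_l2 n. tnorm n u \<le> 1})"
proof -
  from tup_bound[OF assms] obtain K where KK: "K \<ge> 0 \<and> (\<forall>u\<in>tup_l2 n. tnorm n (tapply n T u) \<le> K * tnorm n u)"
    by (rule exE)
  have K: "K \<ge> 0" "\<forall>u\<in>tup_l2 n. tnorm n (tapply n T u) \<le> K * tnorm n u" using KK by simp_all
  show ?thesis
  proof (rule bdd_aboveI[where M=K])
    fix y assume "y \<in> (\<lambda>u. tnorm n (tapply n T u)) ` {u\<in>tup_l2 n. tnorm n u \<le> 1}"
    then obtain u where u: "u \<in> {u\<in>tup_l2 n. tnorm n u \<le> 1}" and y: "y = tnorm n (tapply n T u)" by blast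
    have "y \<le> K * tnorm n u" using K(2) u y by simp
    also have "\<dots> \<le> K" by (rule mult_left_le) (use K(1) u in simp_all)
    finally show "y \<le> K" .
  qed
qed

lemma bop_mnorm_ge:
  assumes "\<And>a b. a < n \<Longrightarrow> b < n \<Longrightarrow> T a b \<in> bop" "u \<in> tup_l2 n" "tnorm n u \<le> 1"
  shows "tnorm n (tapply n T u) \<le> bop_mnorm n T"
  unfolding bop_mnorm_def by (rule cSUP_upper[OF _ bop_mnorm_bdd[OF assms(1)]]) (use assms in auto)

lemma bop_mnorm_le:
  fixes T :: "nat \<Rightarrow> nat \<Rightarrow> ('i \<Rightarrow> complex) \<Rightarrow> ('i \<Rightarrow> complex)"
  assumes "\<And>u. u \<in> tup_l2 n \<Longrightarrow> tnorm n u \<le> 1 \<Longrightarrow> tnorm n (tapply n T u) \<le> B"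
  shows "bop_mnorm n T \<le> B"
  unfolding bop_mnorm_def
proof (rule cSUP_least)
  have "(\<lambda>k i. 0) \<in> {u :: nat \<Rightarrow> 'i \<Rightarrow> complex. u\<in>tup_l2 n \<and> tnorm n u \<le> 1}" by (simp add: zero_tup)
  then show "{u :: nat \<Rightarrow> 'i \<Rightarrow> complex. u\<in>tup_l2 n \<and> tnorm n u \<le> 1} \<noteq> {}" by blast
  fix u :: "nat \<Rightarrow> 'i \<Rightarrow> complex" assume "u \<in> {u\<in>tup_l2 n. tnorm n u \<le> 1}"
  then show "tnorm n (tapply n T u) \<le> B" using assms by simp
qed

lemma bop_mnorm_nonneg:
  assumes "\<And>a b. a < n \<Longrightarrow> b < n \<Longrightarrow> T a b \<in> bop"
  shows "0 \<le> bop_mnorm n T"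
proof -
  have "tnorm n (tapply n T (\<lambda>k i. 0)) \<le> bop_mnorm n T" by (rule bop_mnorm_ge[OF assms]) (simp_all add: zero_tup)
  then show ?thesis using tnorm_nonneg[of n "tapply n T (\<lambda>k i. 0)"] by linarith
qed



definition osemb :: "('v::ab_group_add) mstruct \<Rightarrow> ('v \<Rightarrow> (('i \<Rightarrow> complex) \<Rightarrow> ('i \<Rightarrow> complex))) \<Rightarrow> bool" where
  "osemb S j \<longleftrightarrow> (\<forall>x. j x \<in> bop) \<and> inj j
    \<and> (\<forall>x y. j (x + y) = (\<lambda>u i. j x u i + j y u i))
    \<and> (\<forall>c x. j (msc S c x) = (\<lambda>u i. c * j x u i))
    \<and> (\<forall>x. \<forall>u\<in>l2. \<forall>w\<in>l2. l2inner (j x u) w = l2inner u (j (minv S x) w))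
    \<and> (\<forall>n\<ge>1. \<forall>X. mnorm S n X = bop_mnorm n (\<lambda>a b. j (X a b)))
    \<and> (\<forall>n\<ge>1. \<forall>X. X \<in> mpos S n \<longleftrightarrow> bop_mpos n (\<lambda>a b. j (X a b)))"

lemma os_obtain:
  assumes "operator_system TYPE('i) S"
  obtains j :: "'v::ab_group_add \<Rightarrow> (('i \<Rightarrow> complex) \<Rightarrow> ('i \<Rightarrow> complex))" where "osemb S j"
  using assms unfolding operator_system_def osemb_def by blast

lemma osemb_bop: "osemb S j \<Longrightarrow> j x \<in> bop" unfolding osemb_def by blast
lemma osemb_add: "osemb S j \<Longrightarrow> j (x + y) = (\<lambda>u i. j x u i + j y u i)" unfolding osemb_def by blast
lemma osemb_sc: "osemb S j \<Longrightarrow> j (msc S c x) = (\<lambda>u i. c * j x u i)" unfolding osemb_def by blast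
lemma osemb_inj: "osemb S j \<Longrightarrow> inj j" unfolding osemb_def by blast
lemma osemb_norm: "osemb S j \<Longrightarrow> n \<ge> 1 \<Longrightarrow> mnorm S n X = bop_mnorm n (\<lambda>a b. j (X a b))"
  unfolding osemb_def by blast
lemma osemb_pos: "osemb S j \<Longrightarrow> n \<ge> 1 \<Longrightarrow> X \<in> mpos S n \<longleftrightarrow> bop_mpos n (\<lambda>a b. j (X a b))"
  unfolding osemb_def by blast

lemma osemb_zero: assumes "osemb S j" shows "j 0 = (\<lambda>u i. 0)"
proof -
  have "j (0 + 0) = (\<lambda>u i. j 0 u i + j 0 u i)" by (rule osemb_add[OF assms])
  then have "\<And>u i. j 0 u i = j 0 u i + j 0 u i" by (metis add_0 fun_cong)
  then show ?thesis by (intro ext) simp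
qed

lemma osemb_msc0: assumes "osemb S j" shows "msc S c 0 = 0"
proof -
  have "j (msc S c 0) = j 0" using osemb_sc[OF assms, of c 0] osemb_zero[OF assms] by simp
  then show ?thesis using osemb_inj[OF assms] by (simp add: inj_eq)
qed

lemma osemb_mnorm_nonneg: "osemb S j \<Longrightarrow> n \<ge> 1 \<Longrightarrow> 0 \<le> mnorm S n X"
  using osemb_norm[of S j n X] bop_mnorm_nonneg[of n "\<lambda>a b. j (X a b)"] osemb_bop[of S j] by simp

lemma tinner_zero: "tinner n (\<lambda>k i. 0) u = 0"
  by (simp add: tinner_def l2inner_def)

lemma bop_mpos_zero: "bop_mpos n (\<lambda>a b x i. 0)"
  unfolding bop_mpos_def tapply_def by (simp add: tinner_zero)

lemma osemb_mpos_zero: assumes "osemb S j" "n \<ge> 1" shows "(\<lambda>a b. 0) \<in> mpos S n"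
  using osemb_pos[OF assms, of "\<lambda>a b. 0"] osemb_zero[OF assms(1)] bop_mpos_zero[of n] by simp

lemma amp_zero_map: "amp m (\<lambda>x a b. 0) X = (\<lambda>p q. 0)"
  by (simp add: amp_def)

lemma zero_QS: assumes "osemb S j" shows "(\<lambda>x a b. 0) \<in> QS S m"
  unfolding QS_def clin_mat_def
proof (intro CollectI conjI allI impI ballI)
  fix n :: nat and X assume "1 \<le> n"
  then show "cmnorm (n * m) (amp m (\<lambda>x a b. 0) X) \<le> mnorm S n X"
    using osemb_mnorm_nonneg[OF assms, of n X] by (simp add: amp_zero_map cmnorm_zero)
next
  fix n :: nat and X show "cmpos (n * m) (amp m (\<lambda>x a b. 0) X)" by (simp add: amp_zero_map cmpos_zero)
qed simp_all

lemma QS_clin: "\<phi> \<in> QS S m \<Longrightarrow> clin_mat S \<phi>" unfolding QS_def by blast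
lemma QS_cc: "\<phi> \<in> QS S m \<Longrightarrow> n \<ge> 1 \<Longrightarrow> cmnorm (n * m) (amp m \<phi> X) \<le> mnorm S n X"
  unfolding QS_def by blast
lemma QS_cp: "\<phi> \<in> QS S m \<Longrightarrow> n \<ge> 1 \<Longrightarrow> X \<in> mpos S n \<Longrightarrow> cmpos (n * m) (amp m \<phi> X)"
  unfolding QS_def by blast

lemma clin_zero: assumes "clin_mat S \<phi>" shows "\<phi> 0 a b = 0"
proof -
  have "\<phi> (0 + 0) a b = \<phi> 0 a b + \<phi> 0 a b" using assms unfolding clin_mat_def by blast
  then show ?thesis by simp
qed

lemma amp_zero_mat: "clin_mat S \<phi> \<Longrightarrow> amp m \<phi> (\<lambda>a b. 0) = (\<lambda>p q. 0)"
  by (simp add: amp_def clin_zero)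

lemma amp_add: "clin_mat S \<phi> \<Longrightarrow> amp m \<phi> (\<lambda>a b. X a b + Y a b) = (\<lambda>p q. amp m \<phi> X p q + amp m \<phi> Y p q)"
  unfolding amp_def clin_mat_def by simp

lemma sum_shift_add: "(\<Sum>r<m+(k::nat). h r) = (\<Sum>r<m. h r) + (\<Sum>p<k. h (m+p))"
  by (induction k) (simp_all add: add.assoc)

lemma sum_blocks: "(\<Sum>r<(n::nat)*k. h r) = (\<Sum>a<n. \<Sum>p<k. h (a*k+p))"
proof (induction n)
  case 0
  then show ?case by simp
next
  case (Suc n)
  have "(\<Sum>r<Suc n * k. h r) = (\<Sum>r<n*k + k. h r)" by (simp add: add.commute)
  also have "\<dots> = (\<Sum>r<n*k. h r) + (\<Sum>p<k. h (n*k+p))" by (rule sum_shift_add)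
  finally show ?case using Suc.IH by simp
qed



definition delta :: "'i \<Rightarrow> 'i \<Rightarrow> complex" where
  "delta i0 = (\<lambda>i. if i = i0 then 1 else 0)"

definition cmp :: "('v \<Rightarrow> ('i \<Rightarrow> complex) \<Rightarrow> ('i \<Rightarrow> complex)) \<Rightarrow> (nat \<Rightarrow> 'i) \<Rightarrow> 'v \<Rightarrow> nat \<Rightarrow> nat \<Rightarrow> complex" where
  "cmp j f x p q = j x (delta (f q)) (f p)"

definition vecU :: "nat \<Rightarrow> (nat \<Rightarrow> 'i) \<Rightarrow> (nat \<Rightarrow> complex) \<Rightarrow> nat \<Rightarrow> 'i \<Rightarrow> complex" where
  "vecU k f v b = (\<lambda>i. \<Sum>q<k. v (b*k+q) * delta (f q) i)"

lemma l2_finsupp: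
  assumes "finite G" "\<And>i. i \<notin> G \<Longrightarrow> x i = 0"
  shows "x \<in> l2" "(l2norm x)^2 = (\<Sum>i\<in>G. (cmod (x i))^2)"
proof -
  have s: "(\<lambda>i. (cmod (x i))^2) summable_on G" using assms(1) by (rule summable_on_finite)
  have "(\<lambda>i. (cmod (x i))^2) summable_on UNIV"
    by (rule summable_on_cong_neutral[THEN iffD1, OF _ _ _ s]) (use assms(2) in auto)
  then show "x \<in> l2" unfolding l2_def by simp
  have "(\<Sum>\<^sub>\<infinity>i. (cmod (x i))^2) = (\<Sum>\<^sub>\<infinity>i\<in>G. (cmod (x i))^2)"
    by (rule infsum_cong_neutral) (use assms(2) in auto)
  then show "(l2norm x)^2 = (\<Sum>i\<in>G. (cmod (x i))^2)" using assms(1) by (simp add: l2norm_sq)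
qed

lemma l2inner_finsupp:
  assumes "finite G" "\<And>i. i \<notin> G \<Longrightarrow> x i = 0"
  shows "l2inner y x = (\<Sum>i\<in>G. y i * cnj (x i))"
proof -
  have "(\<Sum>\<^sub>\<infinity>i. y i * cnj (x i)) = (\<Sum>\<^sub>\<infinity>i\<in>G. y i * cnj (x i))"
    by (rule infsum_cong_neutral) (use assms(2) in auto)
  then show ?thesis using assms(1) by (simp add: l2inner_def)
qed

lemma delta_l2: "delta i0 \<in> l2"
  by (rule l2_finsupp(1)[of "{i0}"]) (auto simp: delta_def)

lemma divmod_blk: "p < (k::nat) \<Longrightarrow> (a*k+p) div k = a \<and> (a*k+p) mod k = p"
  by simp

lemma sum_F: "bij_betw f {..<k} F \<Longrightarrow> (\<Sum>i\<in>F. g i) = (\<Sum>p<k. g (f p))"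
  by (simp add: sum.reindex_bij_betw)

context
  fixes f :: "nat \<Rightarrow> 'i" and k :: nat and F :: "'i set"
  assumes bij: "bij_betw f {..<k} F"
begin

lemma finF: "finite F" using bij bij_betw_finite by blast

lemma vecU_at: "q < k \<Longrightarrow> vecU k f v b (f q) = v (b*k+q)"
proof -
  assume q: "q < k"
  have inj: "inj_on f {..<k}" using bij bij_betw_def by blast
  have "vecU k f v b (f q) = (\<Sum>q'<k. if q' = q then v (b*k+q') else 0)"
    unfolding vecU_def delta_def
  proof (rule sum.cong)
    fix q' assume "q' \<in> {..<k}"
    then have "(f q = f q') = (q' = q)" using inj q inj_on_eq_iff[OF inj] by auto
    then show "v (b * k + q') * (if f q = f q' then 1 else 0) = (if q' = q then v (b * k + q') else 0)" by simp
  qed simp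
  also have "\<dots> = v (b*k+q)" using q by simp
  finally show ?thesis .
qed

lemma vecU_off: "i \<notin> F \<Longrightarrow> vecU k f v b i = 0"
proof -
  assume i: "i \<notin> F"
  have "\<And>q. q \<in> {..<k} \<Longrightarrow> f q \<noteq> i" using bij i bij_betw_apply by fastforce
  then show ?thesis unfolding vecU_def delta_def by (intro sum.neutral ballI) auto
qed

lemma vecU_l2: "vecU k f v b \<in> l2"
  by (rule l2_finsupp(1)[OF finF]) (rule vecU_off)

lemma vecU_norm: "(l2norm (vecU k f v b))^2 = (\<Sum>q<k. (cmod (v (b*k+q)))^2)"
proof -
  have "(l2norm (vecU k f v b))^2 = (\<Sum>i\<in>F. (cmod (vecU k f v b i))^2)"
    by (rule l2_finsupp(2)[OF finF]) (rule vecU_off)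
  also have "\<dots> = (\<Sum>q<k. (cmod (vecU k f v b (f q)))^2)" by (rule sum_F[OF bij])
  also have "\<dots> = (\<Sum>q<k. (cmod (v (b*k+q)))^2)" by (rule sum.cong) (simp_all add: vecU_at)
  finally show ?thesis .
qed

lemma vecU_tup: "vecU k f v \<in> tup_l2 n"
  unfolding tup_l2_def using vecU_l2 by blast

lemma vecU_tnorm: "tnorm n (vecU k f v) = cvnorm (n*k) v"
proof -
  have "tnorm n (vecU k f v) = sqrt (\<Sum>b<n. \<Sum>q<k. (cmod (v (b*k+q)))^2)"
    unfolding tnorm_def by (simp add: vecU_norm)
  also have "\<dots> = cvnorm (n*k) v" unfolding cvnorm_def by (simp add: sum_blocks)
  finally show ?thesis .
qed

lemma j_vecU:
  assumes "T \<in> bop"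
  shows "T (vecU k f v b) = (\<lambda>i. \<Sum>q<k. v (b*k+q) * T (delta (f q)) i)"
  unfolding vecU_def by (rule bop_sum[OF assms]) (simp_all add: delta_l2)

lemma cmp_apply:
  assumes "osemb S j" "a < n" "p < k"
  shows "cmapply (n*k) (amp k (cmp j f) X) v (a*k+p) = tapply n (\<lambda>a b. j (X a b)) (vecU k f v) a (f p)"
proof -
  have "cmapply (n*k) (amp k (cmp j f) X) v (a*k+p)
      = (\<Sum>b<n. \<Sum>q<k. amp k (cmp j f) X (a*k+p) (b*k+q) * v (b*k+q))"
    unfolding cmapply_def by (rule sum_blocks)
  also have "\<dots> = (\<Sum>b<n. \<Sum>q<k. j (X a b) (delta (f q)) (f p) * v (b*k+q))"
  proof (intro sum.cong refl)
    fix b q assume "q \<in> {..<k}"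
    then show "amp k (cmp j f) X (a*k+p) (b*k+q) * v (b*k+q) = j (X a b) (delta (f q)) (f p) * v (b*k+q)"
      using assms(3) by (simp add: amp_def cmp_def)
  qed
  also have "\<dots> = (\<Sum>b<n. j (X a b) (vecU k f v b) (f p))"
    by (intro sum.cong refl) (simp add: j_vecU[OF osemb_bop[OF assms(1)]] mult.commute)
  also have "\<dots> = tapply n (\<lambda>a b. j (X a b)) (vecU k f v) a (f p)"
    by (simp add: tapply_def)
  finally show ?thesis .
qed

lemma cmp_cvnorm:
  assumes "osemb S j"
  shows "(cvnorm (n*k) (cmapply (n*k) (amp k (cmp j f) X) v))^2
       = (\<Sum>a<n. \<Sum>i\<in>F. (cmod (tapply n (\<lambda>a b. j (X a b)) (vecU k f v) a i))^2)"
proof -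
  have "(cvnorm (n*k) (cmapply (n*k) (amp k (cmp j f) X) v))^2
      = (\<Sum>r<n*k. (cmod (cmapply (n*k) (amp k (cmp j f) X) v r))^2)"
    unfolding cvnorm_def by (simp add: sum_nonneg)
  also have "\<dots> = (\<Sum>a<n. \<Sum>p<k. (cmod (cmapply (n*k) (amp k (cmp j f) X) v (a*k+p)))^2)"
    by (rule sum_blocks)
  also have "\<dots> = (\<Sum>a<n. \<Sum>p<k. (cmod (tapply n (\<lambda>a b. j (X a b)) (vecU k f v) a (f p)))^2)"
    by (intro sum.cong refl) (simp add: cmp_apply[OF assms])
  also have "\<dots> = (\<Sum>a<n. \<Sum>i\<in>F. (cmod (tapply n (\<lambda>a b. j (X a b)) (vecU k f v) a i))^2)"
    by (intro sum.cong refl) (simp add: sum_F[OF bij])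
  finally show ?thesis .
qed

lemma cmp_QS:
  fixes j :: "'v::ab_group_add \<Rightarrow> ('i \<Rightarrow> complex) \<Rightarrow> ('i \<Rightarrow> complex)"
  assumes "osemb S j"
  shows "cmp j f \<in> QS S k"
  unfolding QS_def
proof (intro CollectI conjI allI impI ballI)
  show "clin_mat S (cmp j f)"
    unfolding clin_mat_def cmp_def by (simp add: osemb_add[OF assms] osemb_sc[OF assms])
next
  fix n :: nat and X :: "nat \<Rightarrow> nat \<Rightarrow> 'v" assume n: "1 \<le> n"
  let ?T = "\<lambda>a b. j (X a b)"
  have Tb: "\<And>a b. ?T a b \<in> bop" using osemb_bop[OF assms] by blast
  show "cmnorm (n * k) (amp k (cmp j f) X) \<le> mnorm S n X"
  proof (rule cmnorm_le)
    fix v assume v: "cvnorm (n * k) v \<le> 1"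
    let ?W = "tapply n ?T (vecU k f v)"
    have W: "?W \<in> tup_l2 n" by (rule tapply_l2[OF _ vecU_tup]) (rule Tb)
    have "(cvnorm (n*k) (cmapply (n*k) (amp k (cmp j f) X) v))^2 = (\<Sum>a<n. \<Sum>i\<in>F. (cmod (?W a i))^2)"
      by (rule cmp_cvnorm[OF assms])
    also have "\<dots> \<le> (\<Sum>a<n. (l2norm (?W a))^2)"
      by (intro sum_mono l2_fin_le finF) (use W in \<open>auto simp: tup_l2_def\<close>)
    also have "\<dots> = (tnorm n ?W)^2" unfolding tnorm_def by (simp add: sum_nonneg)
    finally have "cvnorm (n*k) (cmapply (n*k) (amp k (cmp j f) X) v) \<le> tnorm n ?W"
      using tnorm_nonneg[of n ?W] power2_le_imp_le by blast
    also have "\<dots> \<le> bop_mnorm n ?T"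
      by (rule bop_mnorm_ge[OF Tb vecU_tup]) (simp add: vecU_tnorm v)
    also have "\<dots> = mnorm S n X" using osemb_norm[OF assms n] by simp
    finally show "cvnorm (n * k) (cmapply (n * k) (amp k (cmp j f) X) v) \<le> mnorm S n X" .
  qed
next
  fix n :: nat and X :: "nat \<Rightarrow> nat \<Rightarrow> 'v" assume n: "1 \<le> n" and X: "X \<in> mpos S n"
  let ?T = "\<lambda>a b. j (X a b)"
  have pos: "bop_mpos n ?T" using osemb_pos[OF assms n] X by simp
  show "cmpos (n * k) (amp k (cmp j f) X)"
    unfolding cmpos_def
  proof
    fix v
    let ?U = "vecU k f v"
    let ?W = "tapply n ?T ?U"
    have "(\<Sum>r<n*k. cnj (v r) * cmapply (n*k) (amp k (cmp j f) X) v r)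
        = (\<Sum>a<n. \<Sum>p<k. cnj (v (a*k+p)) * cmapply (n*k) (amp k (cmp j f) X) v (a*k+p))"
      by (rule sum_blocks)
    also have "\<dots> = (\<Sum>a<n. \<Sum>p<k. ?W a (f p) * cnj (?U a (f p)))"
    proof (intro sum.cong refl)
      fix a p assume a: "a \<in> {..<n}" and p: "p \<in> {..<k}"
      have "cmapply (n*k) (amp k (cmp j f) X) v (a*k+p) = ?W a (f p)"
        by (rule cmp_apply[OF assms]) (use a p in auto)
      then show "cnj (v (a*k+p)) * cmapply (n*k) (amp k (cmp j f) X) v (a*k+p) = ?W a (f p) * cnj (?U a (f p))"
        using vecU_at[of p v a] p by (simp add: mult.commute)
    qed
    also have "\<dots> = (\<Sum>a<n. \<Sum>i\<in>F. ?W a i * cnj (?U a i))"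
      by (intro sum.cong refl) (simp add: sum_F[OF bij])
    also have "\<dots> = (\<Sum>a<n. l2inner (?W a) (?U a))"
      by (intro sum.cong refl l2inner_finsupp[symmetric] finF vecU_off)
    also have "\<dots> = tinner n ?W ?U" by (simp add: tinner_def)
    finally have e: "(\<Sum>r<n*k. cnj (v r) * cmapply (n*k) (amp k (cmp j f) X) v r) = tinner n ?W ?U" .
    have "Im (tinner n ?W ?U) = 0 \<and> 0 \<le> Re (tinner n ?W ?U)"
      using pos vecU_tup unfolding bop_mpos_def by blast
    then show "Im (\<Sum>r<n*k. cnj (v r) * cmapply (n*k) (amp k (cmp j f) X) v r) = 0 \<and>
          0 \<le> Re (\<Sum>r<n*k. cnj (v r) * cmapply (n*k) (amp k (cmp j f) X) v r)"
      unfolding e .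
  qed
qed

end



lemma tup_approx:
  fixes n :: nat
  assumes "\<And>a. a < n \<Longrightarrow> u a \<in> l2" "e > 0"
  shows "\<exists>G. finite G \<and> (\<Sum>a<n. (l2norm (u a))^2) - e < (\<Sum>a<n. \<Sum>i\<in>G. (cmod (u a i))^2)"
  using assms
proof (induction n arbitrary: e)
  case 0
  then show ?case by (intro exI[of _ "{}"]) simp
next
  case (Suc n)
  have h: "e/2 > 0" using Suc.prems by simp
  obtain G where G: "finite G" "(\<Sum>a<n. (l2norm (u a))^2) - e/2 < (\<Sum>a<n. \<Sum>i\<in>G. (cmod (u a i))^2)"
    using Suc.IH[OF _ h] Suc.prems(1) by (metis less_SucI)
  have un: "u n \<in> l2" using Suc.prems(1) by simp
  obtain G' where G': "finite G'" "(l2norm (u n))^2 - e/2 < (\<Sum>i\<in>G'. (cmod (u n i))^2)"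
    using l2_approx[OF un h] by (elim exE conjE)
  have f: "finite (G \<union> G')" using G G' by simp
  have m1: "(\<Sum>a<n. \<Sum>i\<in>G. (cmod (u a i))^2) \<le> (\<Sum>a<n. \<Sum>i\<in>G \<union> G'. (cmod (u a i))^2)"
    by (intro sum_mono sum_sq_mono f) auto
  have m2: "(\<Sum>i\<in>G'. (cmod (u n i))^2) \<le> (\<Sum>i\<in>G \<union> G'. (cmod (u n i))^2)"
    by (intro sum_sq_mono f) auto
  show ?case
    by (rule exI[of _ "G \<union> G'"]) (use f G(2) G'(2) m1 m2 in simp)
qed

lemma tail_bound:
  assumes "x \<in> l2" "finite F"
  shows "(l2norm (\<lambda>i. if i \<in> F then 0 else x i))^2 \<le> (l2norm x)^2 - (\<Sum>i\<in>F. (cmod (x i))^2)"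
proof -
  define B where "B = sqrt ((l2norm x)^2 - (\<Sum>i\<in>F. (cmod (x i))^2))"
  have nn: "0 \<le> (l2norm x)^2 - (\<Sum>i\<in>F. (cmod (x i))^2)" using l2_fin_le[OF assms] by linarith
  have B2: "B^2 = (l2norm x)^2 - (\<Sum>i\<in>F. (cmod (x i))^2)" unfolding B_def using nn by simp
  have B0: "0 \<le> B" unfolding B_def using nn by simp
  have "\<And>H. finite H \<Longrightarrow> (\<Sum>i\<in>H. (cmod (if i \<in> F then 0 else x i))^2) \<le> B^2"
  proof -
    fix H :: "'a set" assume H: "finite H"
    have "(\<Sum>i\<in>H. (cmod (if i \<in> F then 0 else x i))^2) = (\<Sum>i\<in>H. if i \<in> F then 0 else (cmod (x i))^2)"
      by (rule sum.cong) auto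
    also have "\<dots> = (\<Sum>i\<in>H - F. (cmod (x i))^2)"
      using H by (simp add: sum.If_cases Diff_eq)
    also have "\<dots> = (\<Sum>i\<in>(H - F) \<union> F. (cmod (x i))^2) - (\<Sum>i\<in>F. (cmod (x i))^2)"
    proof -
      have u: "(\<Sum>i\<in>(H - F) \<union> F. (cmod (x i))^2) = (\<Sum>i\<in>H - F. (cmod (x i))^2) + (\<Sum>i\<in>F. (cmod (x i))^2)"
        by (rule sum.union_disjoint) (use H assms(2) in auto)
      then show ?thesis by linarith
    qed
    also have "\<dots> \<le> (l2norm x)^2 - (\<Sum>i\<in>F. (cmod (x i))^2)"
      using l2_fin_le[OF assms(1), of "(H - F) \<union> F"] H assms(2) by simp
    finally show "(\<Sum>i\<in>H. (cmod (if i \<in> F then 0 else x i))^2) \<le> B^2" using B2 by simp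
  qed
  then have "l2norm (\<lambda>i. if i \<in> F then 0 else x i) \<le> B" by (rule l2_by_bound(2)[OF _ B0])
  then have "(l2norm (\<lambda>i. if i \<in> F then 0 else x i))^2 \<le> B^2"
    by (rule power_mono) (simp add: l2norm_nonneg)
  then show ?thesis using B2 by simp
qed

lemma PF_norm:
  assumes "finite F"
  shows "(\<lambda>i. if i \<in> F then x i else 0) \<in> l2" "(l2norm (\<lambda>i. if i \<in> F then x i else 0))^2 = (\<Sum>i\<in>F. (cmod (x i))^2)"
proof -
  show "(\<lambda>i. if i \<in> F then x i else 0) \<in> l2" by (rule l2_finsupp(1)[OF assms]) simp
  have "(l2norm (\<lambda>i. if i \<in> F then x i else 0))^2 = (\<Sum>i\<in>F. (cmod (if i \<in> F then x i else 0))^2)"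
    by (rule l2_finsupp(2)[OF assms]) simp
  then show "(l2norm (\<lambda>i. if i \<in> F then x i else 0))^2 = (\<Sum>i\<in>F. (cmod (x i))^2)" by simp
qed

lemma tup_fin_le:
  assumes "\<And>a. a < n \<Longrightarrow> y a \<in> l2" "finite F"
  shows "(\<Sum>a<n. \<Sum>i\<in>F. (cmod (y a i))^2) \<le> (tnorm n y)^2"
proof -
  have "(\<Sum>a<n. \<Sum>i\<in>F. (cmod (y a i))^2) \<le> (\<Sum>a<n. (l2norm (y a))^2)"
    by (rule sum_mono) (use l2_fin_le assms in auto)
  also have "\<dots> = (tnorm n y)^2" unfolding tnorm_def by (simp add: sum_nonneg)
  finally show ?thesis .
qed

lemma fin_tri_pairs:
  fixes g d :: "nat \<Rightarrow> 'i \<Rightarrow> complex"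
  assumes "finite F"
  shows "sqrt (\<Sum>a<n. \<Sum>i\<in>F. (cmod (g a i + d a i))^2)
       \<le> sqrt (\<Sum>a<n. \<Sum>i\<in>F. (cmod (g a i))^2) + sqrt (\<Sum>a<n. \<Sum>i\<in>F. (cmod (d a i))^2)"
proof -
  have P: "finite ({..<n} \<times> F)" using assms by simp
  have e: "\<And>h :: nat \<Rightarrow> 'i \<Rightarrow> complex. (\<Sum>a<n. \<Sum>i\<in>F. (cmod (h a i))^2) = (\<Sum>z\<in>{..<n} \<times> F. (cmod (case_prod h z))^2)"
    by (simp add: sum.cartesian_product split_beta)
  show ?thesis unfolding e
    using fin_tri[OF P, of "case_prod g" "case_prod d"] by (simp add: case_prod_beta)
qed

lemma tnorm_sq: "(tnorm n y)^2 = (\<Sum>a<n. (l2norm (y a))^2)"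
  unfolding tnorm_def by (simp add: sum_nonneg)



lemma sqrt_sq_nonneg: "0 \<le> x \<Longrightarrow> sqrt (x^2) = x" by simp

lemma norming:
  fixes j :: "'v::ab_group_add \<Rightarrow> ('i \<Rightarrow> complex) \<Rightarrow> ('i \<Rightarrow> complex)" and X :: "nat \<Rightarrow> nat \<Rightarrow> 'v"
  assumes osj: "osemb S j" and n: "n \<ge> 1"
    and hB: "\<And>k \<phi>. k \<ge> 1 \<Longrightarrow> \<phi> \<in> QS S k \<Longrightarrow> cmnorm (n*k) (amp k \<phi> X) \<le> B"
  shows "mnorm S n X \<le> B"
proof -
  let ?T = "\<lambda>a b. j (X a b)"
  have Tb: "\<And>a b. ?T a b \<in> bop" using osemb_bop[OF osj] by blast
  have "cmnorm (n*1) (amp 1 (\<lambda>x a b. 0) X) \<le> B" by (rule hB) (simp_all add: zero_QS[OF osj])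
  then have B0: "0 \<le> B" using cmnorm_nonneg[of "n*1" "amp 1 (\<lambda>x a b. 0) X"] by linarith
  from tup_bound[OF Tb] obtain K where KK: "K \<ge> 0 \<and> (\<forall>u\<in>tup_l2 n. tnorm n (tapply n ?T u) \<le> K * tnorm n u)"
    by (rule exE)
  have K0: "K \<ge> 0" using KK by simp
  have Kb: "\<And>u. u \<in> tup_l2 n \<Longrightarrow> tnorm n (tapply n ?T u) \<le> K * tnorm n u" using KK by simp
  have "bop_mnorm n ?T \<le> B"
  proof (rule bop_mnorm_le)
    fix u :: "nat \<Rightarrow> 'i \<Rightarrow> complex" assume u: "u \<in> tup_l2 n" "tnorm n u \<le> 1"
    have ul: "\<And>b. b < n \<Longrightarrow> u b \<in> l2" using u(1) unfolding tup_l2_def by blast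
    let ?w = "tapply n ?T u"
    have w: "?w \<in> tup_l2 n" by (rule tapply_l2[OF Tb u(1)])
    have wl: "\<And>a. a < n \<Longrightarrow> ?w a \<in> l2" using w unfolding tup_l2_def by blast
    show "tnorm n ?w \<le> B"
    proof (rule field_le_epsilon)
      fix eps :: real assume eps: "0 < eps"
      define e1 where "e1 = (eps/2)^2"
      define c where "c = eps / (2*(K+1))"
      define eta where "eta = c^2"
      have e1p: "e1 > 0" unfolding e1_def using eps by simp
      have cp: "c > 0" unfolding c_def using eps K0 by simp
      have etap: "eta > 0" unfolding eta_def using cp by simp
      have "\<exists>G. finite G \<and> (\<Sum>a<n. (l2norm (?w a))^2) - e1 < (\<Sum>a<n. \<Sum>i\<in>G. (cmod (?w a i))^2)"
        by (rule tup_approx[OF _ e1p]) (rule wl)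
      then obtain F1 where F1: "finite F1" "(\<Sum>a<n. (l2norm (?w a))^2) - e1 < (\<Sum>a<n. \<Sum>i\<in>F1. (cmod (?w a i))^2)"
        by (elim exE conjE)
      have "\<exists>G. finite G \<and> (\<Sum>a<n. (l2norm (u a))^2) - eta < (\<Sum>a<n. \<Sum>i\<in>G. (cmod (u a i))^2)"
        by (rule tup_approx[OF _ etap]) (rule ul)
      then obtain F2 where F2: "finite F2" "(\<Sum>a<n. (l2norm (u a))^2) - eta < (\<Sum>a<n. \<Sum>i\<in>F2. (cmod (u a i))^2)"
        by (elim exE conjE)
      define F where "F = F1 \<union> F2 \<union> {undefined}"
      have finF: "finite F" unfolding F_def using F1(1) F2(1) by simp
      have F1F: "F1 \<subseteq> F" unfolding F_def by blast
      have F2F: "F2 \<subseteq> F" unfolding F_def by blast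
      have Fne: "F \<noteq> {}" unfolding F_def by simp
      define k where "k = card F"
      have "card F > 0" using finF Fne by (simp add: card_gt_0_iff)
      then have k1: "k \<ge> 1" by (simp add: k_def)
      from ex_bij_betw_nat_finite[OF finF] obtain f where "bij_betw f {0..<card F} F" by (rule exE)
      then have bij: "bij_betw f {..<k} F" by (simp add: k_def atLeast0LessThan)
      define v where "v r = u (r div k) (f (r mod k))" for r
      define P where "P b = (\<lambda>i. if i \<in> F then u b i else 0)" for b
      have UP: "vecU k f v = P"
      proof (intro ext)
        fix b i show "vecU k f v b i = P b i"
        proof (cases "i \<in> F")
          case True
          then have "i \<in> f ` {..<k}" using bij bij_betw_imp_surj_on by blast
          then obtain q where q: "q < k" "i = f q" by blast
          then show ?thesis using vecU_at[OF bij q(1), of v b] divmod_blk[OF q(1), of b] True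
            by (simp add: v_def P_def)
        next
          case False
          then show ?thesis using vecU_off[OF bij False] by (simp add: P_def)
        qed
      qed
      have Pl: "\<And>b. P b \<in> l2" unfolding P_def by (rule PF_norm(1)[OF finF])
      have Pn: "\<And>b. b < n \<Longrightarrow> l2norm (P b) \<le> l2norm (u b)"
      proof -
        fix b assume b: "b < n"
        have "(l2norm (P b))^2 = (\<Sum>i\<in>F. (cmod (u b i))^2)" unfolding P_def by (rule PF_norm(2)[OF finF])
        also have "\<dots> \<le> (l2norm (u b))^2" by (rule l2_fin_le[OF ul[OF b] finF])
        finally show "l2norm (P b) \<le> l2norm (u b)" using power2_le_imp_le l2norm_nonneg by blast
      qed
      have tP: "tnorm n P \<le> tnorm n u"
        unfolding tnorm_L2 by (rule L2_set_mono) (auto simp: Pn l2norm_nonneg)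
      have cv: "cvnorm (n*k) v \<le> 1" using vecU_tnorm[OF bij, of n v] UP tP u(2) by simp
      let ?g = "tapply n ?T P"
      have phiQS: "cmp j f \<in> QS S k" by (rule cmp_QS[OF bij osj])
      have c1: "cvnorm (n*k) (cmapply (n*k) (amp k (cmp j f) X) v) \<le> B"
        using cmnorm_ge[OF cv, of "amp k (cmp j f) X"] hB[OF k1 phiQS] by linarith
      have c2: "(cvnorm (n*k) (cmapply (n*k) (amp k (cmp j f) X) v))^2 = (\<Sum>a<n. \<Sum>i\<in>F. (cmod (?g a i))^2)"
        using cmp_cvnorm[OF bij osj, of n X v] UP by simp
      have "sqrt ((cvnorm (n*k) (cmapply (n*k) (amp k (cmp j f) X) v))^2) = sqrt (\<Sum>a<n. \<Sum>i\<in>F. (cmod (?g a i))^2)"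
        using c2 by simp
      then have cvn: "cvnorm (n*k) (cmapply (n*k) (amp k (cmp j f) X) v) = sqrt (\<Sum>a<n. \<Sum>i\<in>F. (cmod (?g a i))^2)"
        using cvnorm_nonneg[of "n*k" "cmapply (n*k) (amp k (cmp j f) X) v"] by simp
      have c3: "sqrt (\<Sum>a<n. \<Sum>i\<in>F. (cmod (?g a i))^2) \<le> B"
        using c1 unfolding cvn .
      define D where "D b = (\<lambda>i. if i \<in> F then 0 else u b i)" for b
      have Deq: "\<And>b. D b = (\<lambda>i. u b i - P b i)" unfolding D_def P_def by auto
      have Dl: "\<And>b. b < n \<Longrightarrow> D b \<in> l2" unfolding Deq by (rule l2_diff[OF ul Pl])
      have Dtup: "D \<in> tup_l2 n" unfolding tup_l2_def using Dl by blast
      have uPD: "\<And>b. b < n \<Longrightarrow> u b = (\<lambda>i. P b i + D b i)" unfolding D_def P_def by auto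
      have wgd: "\<And>a i. ?w a i = ?g a i + tapply n ?T D a i"
      proof -
        fix a i
        have "?w a i = (\<Sum>b<n. ?T a b (\<lambda>i. P b i + D b i) i)"
          unfolding tapply_def by (rule sum.cong) (simp_all add: uPD)
        also have "\<dots> = (\<Sum>b<n. ?T a b (P b) i + ?T a b (D b) i)"
          by (rule sum.cong) (simp_all add: bop_add[OF Tb Pl Dl])
        also have "\<dots> = ?g a i + tapply n ?T D a i" by (simp add: tapply_def sum.distrib)
        finally show "?w a i = ?g a i + tapply n ?T D a i" .
      qed
      have "(tnorm n D)^2 = (\<Sum>b<n. (l2norm (D b))^2)" by (rule tnorm_sq)
      also have "\<dots> \<le> (\<Sum>b<n. (l2norm (u b))^2 - (\<Sum>i\<in>F. (cmod (u b i))^2))"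
        by (rule sum_mono) (simp add: D_def tail_bound[OF ul finF])
      also have "\<dots> = (\<Sum>b<n. (l2norm (u b))^2) - (\<Sum>b<n. \<Sum>i\<in>F. (cmod (u b i))^2)"
        by (simp add: sum_subtractf)
      also have "\<dots> \<le> (\<Sum>b<n. (l2norm (u b))^2) - (\<Sum>b<n. \<Sum>i\<in>F2. (cmod (u b i))^2)"
        using sum_mono[of "{..<n}" "\<lambda>b. \<Sum>i\<in>F2. (cmod (u b i))^2" "\<lambda>b. \<Sum>i\<in>F. (cmod (u b i))^2"]
          sum_sq_mono[OF finF F2F] by simp
      also have "\<dots> < eta" using F2(2) by linarith
      finally have "(tnorm n D)^2 < c^2" unfolding eta_def .
      then have "tnorm n D < c" by (rule power2_less_imp_less) (use cp in simp)
      then have tD: "tnorm n D \<le> c" by simp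
      have tTD: "tnorm n (tapply n ?T D) \<le> eps/2"
      proof -
        have "tnorm n (tapply n ?T D) \<le> K * tnorm n D" by (rule Kb[OF Dtup])
        also have "\<dots> \<le> K * c" by (rule mult_left_mono[OF tD K0])
        also have "\<dots> = (eps/2) * (K / (K+1))" unfolding c_def using K0 by (simp add: field_simps)
        also have "\<dots> \<le> eps/2" by (rule mult_left_le) (use K0 eps in simp_all)
        finally show ?thesis .
      qed
      have TDl: "\<And>a. a < n \<Longrightarrow> tapply n ?T D a \<in> l2"
      proof -
        have "tapply n ?T D \<in> tup_l2 n" by (rule tapply_l2[OF _ Dtup]) (rule Tb)
        then show "\<And>a. a < n \<Longrightarrow> tapply n ?T D a \<in> l2" unfolding tup_l2_def by blast
      qed
      have s1: "sqrt (\<Sum>a<n. \<Sum>i\<in>F. (cmod (?w a i))^2)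
          \<le> sqrt (\<Sum>a<n. \<Sum>i\<in>F. (cmod (?g a i))^2) + sqrt (\<Sum>a<n. \<Sum>i\<in>F. (cmod (tapply n ?T D a i))^2)"
        unfolding wgd by (rule fin_tri_pairs[OF finF])
      have s2: "sqrt (\<Sum>a<n. \<Sum>i\<in>F. (cmod (tapply n ?T D a i))^2) \<le> tnorm n (tapply n ?T D)"
      proof -
        have "(\<Sum>a<n. \<Sum>i\<in>F. (cmod (tapply n ?T D a i))^2) \<le> (tnorm n (tapply n ?T D))^2"
          by (rule tup_fin_le[OF _ finF]) (rule TDl)
        then have "sqrt (\<Sum>a<n. \<Sum>i\<in>F. (cmod (tapply n ?T D a i))^2) \<le> sqrt ((tnorm n (tapply n ?T D))^2)"
          by (rule real_sqrt_le_mono)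
        then show ?thesis using tnorm_nonneg[of n "tapply n ?T D"] by simp
      qed
      have s3: "tnorm n ?w \<le> sqrt (\<Sum>a<n. \<Sum>i\<in>F. (cmod (?w a i))^2) + eps/2"
      proof -
        have m: "(\<Sum>a<n. \<Sum>i\<in>F1. (cmod (?w a i))^2) \<le> (\<Sum>a<n. \<Sum>i\<in>F. (cmod (?w a i))^2)"
          by (intro sum_mono sum_sq_mono[OF finF F1F])
        have "(tnorm n ?w)^2 \<le> (\<Sum>a<n. \<Sum>i\<in>F. (cmod (?w a i))^2) + e1"
          using F1(2) m tnorm_sq[of n ?w] by linarith
        then have "sqrt ((tnorm n ?w)^2) \<le> sqrt ((\<Sum>a<n. \<Sum>i\<in>F. (cmod (?w a i))^2) + e1)"
          by (rule real_sqrt_le_mono)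
        also have "\<dots> \<le> sqrt (\<Sum>a<n. \<Sum>i\<in>F. (cmod (?w a i))^2) + sqrt e1"
          by (rule sqrt_add_le_add_sqrt) (use e1p in \<open>simp_all add: sum_nonneg\<close>)
        also have "sqrt e1 = eps/2" unfolding e1_def using eps by simp
        finally show ?thesis using tnorm_nonneg[of n ?w] by simp
      qed
      show "tnorm n ?w \<le> B + eps" using s1 s2 s3 c3 tTD by linarith
    qed
  qed
  then show ?thesis using osemb_norm[OF osj n] by simp
qed



definition fstM :: "(nat \<Rightarrow> nat \<Rightarrow> 'a \<times> 'b) \<Rightarrow> nat \<Rightarrow> nat \<Rightarrow> 'a" where "fstM X = (\<lambda>a b. fst (X a b))"
definition sndM :: "(nat \<Rightarrow> nat \<Rightarrow> 'a \<times> 'b) \<Rightarrow> nat \<Rightarrow> nat \<Rightarrow> 'b" where "sndM X = (\<lambda>a b. snd (X a b))"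

definition cps :: "('a::ab_group_add) mstruct \<Rightarrow> ('b::ab_group_add) mstruct \<Rightarrow> (nat \<times> ('a \<Rightarrow> nat \<Rightarrow> nat \<Rightarrow> complex) \<times> ('b \<Rightarrow> nat \<Rightarrow> nat \<Rightarrow> complex)) set" where
  "cps S T = {(m, \<phi>, \<psi>). m \<ge> 1 \<and> \<phi> \<in> QS S m \<and> \<psi> \<in> QS T m}"

definition cpf :: "nat \<Rightarrow> (nat \<Rightarrow> nat \<Rightarrow> ('a \<times> 'b)) \<Rightarrow> (nat \<times> ('a \<Rightarrow> nat \<Rightarrow> nat \<Rightarrow> complex) \<times> ('b \<Rightarrow> nat \<Rightarrow> nat \<Rightarrow> complex)) \<Rightarrow> real" where
  "cpf n X t = (case t of (m, \<phi>, \<psi>) \<Rightarrow> cmnorm (n * m) (\<lambda>p q. amp m \<phi> (fstM X) p q + amp m \<psi> (sndM X) p q))"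

lemma coprod_mnorm: "mnorm (coprod S T) n X = (SUP t\<in>cps S T. cpf n X t)"
  unfolding coprod_def cps_def cpf_def fstM_def sndM_def by simp

lemma coprod_mpos: "X \<in> mpos (coprod S T) n \<longleftrightarrow> fstM X \<in> mpos S n \<and> sndM X \<in> mpos T n"
  unfolding coprod_def fstM_def sndM_def by simp

lemma coprod_msc: "msc (coprod S T) c (x, y) = (msc S c x, msc T c y)"
  unfolding coprod_def by simp

lemma cps_mem: "(m, \<phi>, \<psi>) \<in> cps S T \<longleftrightarrow> m \<ge> 1 \<and> \<phi> \<in> QS S m \<and> \<psi> \<in> QS T m"
  unfolding cps_def by simp

lemma coprod_bdd:
  assumes "n \<ge> 1"
  shows "bdd_above (cpf n X ` cps S T)"
proof (rule bdd_aboveI[where M="mnorm S n (fstM X) + mnorm T n (sndM X)"])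
  fix y assume "y \<in> cpf n X ` cps S T"
  then obtain t where t: "t \<in> cps S T" and y: "y = cpf n X t" by (rule imageE)
  obtain m \<phi> \<psi> where tt: "t = (m, \<phi>, \<psi>)" by (cases t) blast
  have m: "\<phi> \<in> QS S m" "\<psi> \<in> QS T m" using t tt cps_mem by blast+
  have "y \<le> cmnorm (n*m) (amp m \<phi> (fstM X)) + cmnorm (n*m) (amp m \<psi> (sndM X))"
    unfolding y tt cpf_def by (simp add: cmnorm_add)
  also have "\<dots> \<le> mnorm S n (fstM X) + mnorm T n (sndM X)"
    using QS_cc[OF m(1) assms, of "fstM X"] QS_cc[OF m(2) assms, of "sndM X"] by linarith
  finally show "y \<le> mnorm S n (fstM X) + mnorm T n (sndM X)" .
qed

lemma coprod_ge:
  assumes "n \<ge> 1" "m \<ge> 1" "\<phi> \<in> QS S m" "\<psi> \<in> QS T m"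
  shows "cmnorm (n * m) (\<lambda>p q. amp m \<phi> (fstM X) p q + amp m \<psi> (sndM X) p q) \<le> mnorm (coprod S T) n X"
proof -
  have "cpf n X (m, \<phi>, \<psi>) \<le> (SUP t\<in>cps S T. cpf n X t)"
    by (rule cSUP_upper[OF _ coprod_bdd[OF assms(1)]]) (use assms in \<open>simp add: cps_mem\<close>)
  then show ?thesis by (simp add: cpf_def coprod_mnorm)
qed

context
  fixes S :: "('a::ab_group_add) mstruct" and T :: "('b::ab_group_add) mstruct"
    and jS :: "'a \<Rightarrow> ('i \<Rightarrow> complex) \<Rightarrow> ('i \<Rightarrow> complex)"
    and jT :: "'b \<Rightarrow> ('j \<Rightarrow> complex) \<Rightarrow> ('j \<Rightarrow> complex)"
  assumes oS: "osemb S jS" and oT: "osemb T jT"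
begin

lemma coprod_le_S:
  assumes n: "n \<ge> 1"
  shows "mnorm (coprod S T) n (\<lambda>a b. (X a b, 0)) \<le> mnorm S n X"
  unfolding coprod_mnorm
proof (rule cSUP_least)
  have "(1, \<lambda>x a b. 0, \<lambda>x a b. 0) \<in> cps S T" by (simp add: cps_mem zero_QS[OF oS] zero_QS[OF oT])
  then show "cps S T \<noteq> {}" by blast
  fix t assume t: "t \<in> cps S T"
  obtain m \<phi> \<psi> where tt: "t = (m, \<phi>, \<psi>)" by (cases t) blast
  have m: "\<phi> \<in> QS S m" "\<psi> \<in> QS T m" using t tt cps_mem by blast+
  have "cpf n (\<lambda>a b. (X a b, 0)) t = cmnorm (n*m) (amp m \<phi> X)"
    unfolding tt cpf_def fstM_def sndM_def using amp_zero_mat[OF QS_clin[OF m(2)], of m] by simp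
  also have "\<dots> \<le> mnorm S n X" by (rule QS_cc[OF m(1) n])
  finally show "cpf n (\<lambda>a b. (X a b, 0)) t \<le> mnorm S n X" .
qed

lemma coprod_le_T:
  assumes n: "n \<ge> 1"
  shows "mnorm (coprod S T) n (\<lambda>a b. (0, Y a b)) \<le> mnorm T n Y"
  unfolding coprod_mnorm
proof (rule cSUP_least)
  have "(1, \<lambda>x a b. 0, \<lambda>x a b. 0) \<in> cps S T" by (simp add: cps_mem zero_QS[OF oS] zero_QS[OF oT])
  then show "cps S T \<noteq> {}" by blast
  fix t assume t: "t \<in> cps S T"
  obtain m \<phi> \<psi> where tt: "t = (m, \<phi>, \<psi>)" by (cases t) blast
  have m: "\<phi> \<in> QS S m" "\<psi> \<in> QS T m" using t tt cps_mem by blast+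
  have "cpf n (\<lambda>a b. (0, Y a b)) t = cmnorm (n*m) (amp m \<psi> Y)"
    unfolding tt cpf_def fstM_def sndM_def using amp_zero_mat[OF QS_clin[OF m(1)], of m] by simp
  also have "\<dots> \<le> mnorm T n Y" by (rule QS_cc[OF m(2) n])
  finally show "cpf n (\<lambda>a b. (0, Y a b)) t \<le> mnorm T n Y" .
qed

lemma S_le_coprod:
  assumes n: "n \<ge> 1"
  shows "mnorm S n (fstM X) \<le> mnorm (coprod S T) n X"
proof (rule norming[OF oS n])
  fix k \<phi> assume k: "k \<ge> 1" and \<phi>: "\<phi> \<in> QS S k"
  have "cmnorm (n*k) (\<lambda>p q. amp k \<phi> (fstM X) p q + amp k (\<lambda>x a b. 0) (sndM X) p q) \<le> mnorm (coprod S T) n X"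
    by (rule coprod_ge[OF n k \<phi> zero_QS[OF oT]])
  then show "cmnorm (n*k) (amp k \<phi> (fstM X)) \<le> mnorm (coprod S T) n X"
    by (simp add: amp_zero_map)
qed

lemma T_le_coprod:
  assumes n: "n \<ge> 1"
  shows "mnorm T n (sndM X) \<le> mnorm (coprod S T) n X"
proof (rule norming[OF oT n])
  fix k \<psi> assume k: "k \<ge> 1" and \<psi>: "\<psi> \<in> QS T k"
  have "cmnorm (n*k) (\<lambda>p q. amp k (\<lambda>x a b. 0) (fstM X) p q + amp k \<psi> (sndM X) p q) \<le> mnorm (coprod S T) n X"
    by (rule coprod_ge[OF n k zero_QS[OF oS] \<psi>])
  then show "cmnorm (n*k) (amp k \<psi> (sndM X)) \<le> mnorm (coprod S T) n X"
    by (simp add: amp_zero_map)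
qed

end



lemma dual_vals_mem:
  "y \<in> dual_vals S n F \<longleftrightarrow> (\<exists>m X. y = cmnorm (m * n) (amp n (\<lambda>x a b. F a b x) X) \<and> m \<ge> 1 \<and> mnorm S m X \<le> 1)"
  unfolding dual_vals_def by blast

lemma osemb_mnorm_zero: assumes "osemb S j" "n \<ge> 1" shows "mnorm S n (\<lambda>a b. 0) \<le> 0"
proof -
  have "bop_mnorm n (\<lambda>a b. j 0) \<le> 0"
  proof (rule bop_mnorm_le)
    fix u :: "nat \<Rightarrow> 'b \<Rightarrow> complex"
    have "tapply n (\<lambda>a b. j 0) u = (\<lambda>k i. 0)" by (simp add: tapply_def osemb_zero[OF assms(1)])
    then show "tnorm n (tapply n (\<lambda>a b. j 0) u) \<le> 0" by (simp add: zero_tup)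
  qed
  then show ?thesis using osemb_norm[OF assms, of "\<lambda>a b. 0"] by simp
qed

lemma dual_vals_ne: assumes "osemb S j" shows "cmnorm (1 * n) (amp n (\<lambda>x a b. F a b x) (\<lambda>a b. 0)) \<in> dual_vals S n F"
  unfolding dual_vals_mem using osemb_mnorm_zero[OF assms, of 1] by fastforce

lemma dual_mnorm_nonneg: assumes "osemb S j" "dual_mat S n F" shows "0 \<le> dual_mnorm S n F"
proof -
  have b: "bdd_above (dual_vals S n F)" using assms(2) unfolding dual_mat_def by (rule conjunct2)
  have "cmnorm (1 * n) (amp n (\<lambda>x a b. F a b x) (\<lambda>a b. 0)) \<le> dual_mnorm S n F"
    unfolding dual_mnorm_def by (rule cSup_upper[OF dual_vals_ne[OF assms(1)] b])
  then show ?thesis using cmnorm_nonneg order_trans by blast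
qed

lemma cmnorm_sub:
  assumes a: "a < n" and b: "b < n"
  shows "cmnorm m (\<lambda>p q. A (p*n+a) (q*n+b)) \<le> cmnorm (m*n) A"
proof (rule cmnorm_le)
  fix w assume w: "cvnorm m w \<le> 1"
  define W where "W r = (if r mod n = b then w (r div n) else 0)" for r
  have Wb: "\<And>p q. q < n \<Longrightarrow> W (p*n+q) = (if q = b then w p else 0)"
    unfolding W_def using divmod_blk by simp
  have "(cvnorm (m*n) W)^2 = (\<Sum>r<m*n. (cmod (W r))^2)" unfolding cvnorm_def by (simp add: sum_nonneg)
  also have "\<dots> = (\<Sum>p<m. \<Sum>q<n. (cmod (W (p*n+q)))^2)" by (rule sum_blocks)
  also have "\<dots> = (\<Sum>p<m. \<Sum>q<n. if q = b then (cmod (w p))^2 else 0)"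
    by (intro sum.cong refl) (simp add: Wb)
  also have "\<dots> = (\<Sum>p<m. (cmod (w p))^2)" using b by simp
  also have "\<dots> = (cvnorm m w)^2" unfolding cvnorm_def by (simp add: sum_nonneg)
  finally have "(cvnorm (m*n) W)^2 = (cvnorm m w)^2" .
  then have cW: "cvnorm (m*n) W = cvnorm m w" using cvnorm_nonneg by (metis power2_eq_iff_nonneg)
  have AW: "\<And>p. cmapply (m*n) A W (p*n+a) = cmapply m (\<lambda>p q. A (p*n+a) (q*n+b)) w p"
  proof -
    fix p
    have "cmapply (m*n) A W (p*n+a) = (\<Sum>p'<m. \<Sum>q<n. A (p*n+a) (p'*n+q) * W (p'*n+q))"
      unfolding cmapply_def by (rule sum_blocks)
    also have "\<dots> = (\<Sum>p'<m. \<Sum>q<n. if q = b then A (p*n+a) (p'*n+b) * w p' else 0)"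
      by (intro sum.cong refl) (simp add: Wb)
    also have "\<dots> = cmapply m (\<lambda>p q. A (p*n+a) (q*n+b)) w p" using b by (simp add: cmapply_def)
    finally show "cmapply (m*n) A W (p*n+a) = cmapply m (\<lambda>p q. A (p*n+a) (q*n+b)) w p" .
  qed
  have "(cvnorm m (cmapply m (\<lambda>p q. A (p*n+a) (q*n+b)) w))^2 = (\<Sum>p<m. (cmod (cmapply (m*n) A W (p*n+a)))^2)"
    unfolding cvnorm_def AW by (simp add: sum_nonneg)
  also have "\<dots> \<le> (\<Sum>p<m. \<Sum>q<n. (cmod (cmapply (m*n) A W (p*n+q)))^2)"
    by (intro sum_mono member_le_sum) (use a in auto)
  also have "\<dots> = (\<Sum>r<m*n. (cmod (cmapply (m*n) A W r))^2)" by (rule sum_blocks[symmetric])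
  also have "\<dots> = (cvnorm (m*n) (cmapply (m*n) A W))^2" unfolding cvnorm_def by (simp add: sum_nonneg)
  finally have "cvnorm m (cmapply m (\<lambda>p q. A (p*n+a) (q*n+b)) w) \<le> cvnorm (m*n) (cmapply (m*n) A W)"
    using power2_le_imp_le cvnorm_nonneg by blast
  also have "\<dots> \<le> cmnorm (m*n) A" by (rule cmnorm_ge) (simp add: cW w)
  finally show "cvnorm m (cmapply m (\<lambda>p q. A (p*n+a) (q*n+b)) w) \<le> cmnorm (m*n) A" .
qed

lemma dual_mat_entry:
  assumes "dual_mat S n F" "a < n" "b < n"
  shows "dual_mat S 1 (\<lambda>_ _. F a b)"
proof -
  have cl: "clinfun S (F a b)" using assms unfolding dual_mat_def by blast
  have bd: "bdd_above (dual_vals S n F)" using assms(1) unfolding dual_mat_def by (rule conjunct2)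
  then obtain M where M: "\<And>y. y \<in> dual_vals S n F \<Longrightarrow> y \<le> M" unfolding bdd_above_def by blast
  have "bdd_above (dual_vals S 1 (\<lambda>_ _. F a b))"
  proof (rule bdd_aboveI[where M=M])
    fix y assume "y \<in> dual_vals S 1 (\<lambda>_ _. F a b)"
    then obtain m X where y: "y = cmnorm (m * 1) (amp 1 (\<lambda>x _ _. F a b x) X)" and mX: "m \<ge> 1" "mnorm S m X \<le> 1"
      unfolding dual_vals_mem by (elim exE conjE)
    have e: "amp 1 (\<lambda>x _ _. F a b x) X = (\<lambda>p q. amp n (\<lambda>x a b. F a b x) X (p*n+a) (q*n+b))"
      using assms(2,3) divmod_blk by (simp add: amp_def)
    have "y \<le> cmnorm (m * n) (amp n (\<lambda>x a b. F a b x) X)"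
      unfolding y e using cmnorm_sub[OF assms(2,3), of m "amp n (\<lambda>x a b. F a b x) X"] by simp
    also have "\<dots> \<le> M" by (rule M) (unfold dual_vals_mem, use mX in blast)
    finally show "y \<le> M" .
  qed
  then show ?thesis using cl unfolding dual_mat_def by simp
qed



context
  fixes S :: "('a::ab_group_add) mstruct" and T :: "('b::ab_group_add) mstruct"
    and jS :: "'a \<Rightarrow> ('i \<Rightarrow> complex) \<Rightarrow> ('i \<Rightarrow> complex)"
    and jT :: "'b \<Rightarrow> ('j \<Rightarrow> complex) \<Rightarrow> ('j \<Rightarrow> complex)"
  assumes oS: "osemb S jS" and oT: "osemb T jT"
begin

lemma clin_restr:
  assumes "clinfun (coprod S T) f"
  shows "clinfun S (\<lambda>x. f (x, 0))" "clinfun T (\<lambda>y. f (0, y))"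
proof -
  have ad: "\<And>p q. f (p + q) = f p + f q" and sc: "\<And>c p. f (msc (coprod S T) c p) = c * f p"
    using assms unfolding clinfun_def by blast+
  show "clinfun S (\<lambda>x. f (x, 0))" unfolding clinfun_def
  proof (intro conjI allI)
    fix x y :: 'a
    show "f (x + y, 0) = f (x, 0) + f (y, 0)" using ad[of "(x, 0)" "(y, 0)"] by simp
  next
    fix c x
    have "f (msc S c x, 0) = f (msc (coprod S T) c (x, 0))" by (simp add: coprod_msc osemb_msc0[OF oT])
    then show "f (msc S c x, 0) = c * f (x, 0)" using sc by simp
  qed
  show "clinfun T (\<lambda>y. f (0, y))" unfolding clinfun_def
  proof (intro conjI allI)
    fix x y :: 'b
    show "f (0, x + y) = f (0, x) + f (0, y)" using ad[of "(0, x)" "(0, y)"] by simp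
  next
    fix c x
    have "f (0, msc T c x) = f (msc (coprod S T) c (0, x))" by (simp add: coprod_msc osemb_msc0[OF oS])
    then show "f (0, msc T c x) = c * f (0, x)" using sc by simp
  qed
qed

lemma dual_vals_S_sub: "dual_vals S n (\<lambda>a b x. F a b (x, 0)) \<subseteq> dual_vals (coprod S T) n F"
proof
  fix y assume "y \<in> dual_vals S n (\<lambda>a b x. F a b (x, 0))"
  then obtain m X where y: "y = cmnorm (m * n) (amp n (\<lambda>x a b. F a b (x, 0)) X)" and mX: "m \<ge> 1" "mnorm S m X \<le> 1"
    unfolding dual_vals_mem by (elim exE conjE)
  have e: "amp n (\<lambda>x a b. F a b x) (\<lambda>a b. (X a b, 0)) = amp n (\<lambda>x a b. F a b (x, 0)) X" by (simp add: amp_def)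
  have "mnorm (coprod S T) m (\<lambda>a b. (X a b, 0)) \<le> 1" using coprod_le_S[OF oS oT mX(1), of X] mX(2) by linarith
  then show "y \<in> dual_vals (coprod S T) n F" unfolding dual_vals_mem y
    by (intro exI[of _ m] exI[of _ "\<lambda>a b. (X a b, 0)"]) (use mX(1) in \<open>simp add: e\<close>)
qed

lemma dual_vals_T_sub: "dual_vals T n (\<lambda>a b y. F a b (0, y)) \<subseteq> dual_vals (coprod S T) n F"
proof
  fix y assume "y \<in> dual_vals T n (\<lambda>a b y. F a b (0, y))"
  then obtain m X where y: "y = cmnorm (m * n) (amp n (\<lambda>x a b. F a b (0, x)) X)" and mX: "m \<ge> 1" "mnorm T m X \<le> 1"
    unfolding dual_vals_mem by (elim exE conjE)
  have e: "amp n (\<lambda>x a b. F a b x) (\<lambda>a b. (0, X a b)) = amp n (\<lambda>x a b. F a b (0, x)) X" by (simp add: amp_def)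
  have "mnorm (coprod S T) m (\<lambda>a b. (0, X a b)) \<le> 1" using coprod_le_T[OF oS oT mX(1), of X] mX(2) by linarith
  then show "y \<in> dual_vals (coprod S T) n F" unfolding dual_vals_mem y
    by (intro exI[of _ m] exI[of _ "\<lambda>a b. (0, X a b)"]) (use mX(1) in \<open>simp add: e\<close>)
qed

lemma dual_mat_S:
  assumes "dual_mat (coprod S T) n F"
  shows "dual_mat S n (\<lambda>a b x. F a b (x, 0))" "dual_mnorm S n (\<lambda>a b x. F a b (x, 0)) \<le> dual_mnorm (coprod S T) n F"
proof -
  have bd: "bdd_above (dual_vals (coprod S T) n F)" using assms unfolding dual_mat_def by (rule conjunct2)
  have cl: "\<forall>a<n. \<forall>b<n. clinfun (coprod S T) (F a b)" using assms unfolding dual_mat_def by (rule conjunct1)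
  have "bdd_above (dual_vals S n (\<lambda>a b x. F a b (x, 0)))" by (rule bdd_above_mono[OF bd dual_vals_S_sub])
  then show "dual_mat S n (\<lambda>a b x. F a b (x, 0))" unfolding dual_mat_def using cl clin_restr(1) by blast
  show "dual_mnorm S n (\<lambda>a b x. F a b (x, 0)) \<le> dual_mnorm (coprod S T) n F"
    unfolding dual_mnorm_def by (rule cSup_subset_mono[OF _ bd dual_vals_S_sub]) (use dual_vals_ne[OF oS] in blast)
qed

lemma dual_mat_T:
  assumes "dual_mat (coprod S T) n F"
  shows "dual_mat T n (\<lambda>a b y. F a b (0, y))" "dual_mnorm T n (\<lambda>a b y. F a b (0, y)) \<le> dual_mnorm (coprod S T) n F"
proof -
  have bd: "bdd_above (dual_vals (coprod S T) n F)" using assms unfolding dual_mat_def by (rule conjunct2)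
  have cl: "\<forall>a<n. \<forall>b<n. clinfun (coprod S T) (F a b)" using assms unfolding dual_mat_def by (rule conjunct1)
  have "bdd_above (dual_vals T n (\<lambda>a b y. F a b (0, y)))" by (rule bdd_above_mono[OF bd dual_vals_T_sub])
  then show "dual_mat T n (\<lambda>a b y. F a b (0, y))" unfolding dual_mat_def using cl clin_restr(2) by blast
  show "dual_mnorm T n (\<lambda>a b y. F a b (0, y)) \<le> dual_mnorm (coprod S T) n F"
    unfolding dual_mnorm_def by (rule cSup_subset_mono[OF _ bd dual_vals_T_sub]) (use dual_vals_ne[OF oT] in blast)
qed

lemma amp_split:
  assumes "dual_mat (coprod S T) n F" "n \<ge> 1"
  shows "amp n (\<lambda>x a b. F a b x) X = (\<lambda>p q. amp n (\<lambda>x a b. F a b (x, 0)) (fstM X) p q + amp n (\<lambda>y a b. F a b (0, y)) (sndM X) p q)"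
proof (intro ext)
  fix p q
  have cl: "\<forall>a<n. \<forall>b<n. clinfun (coprod S T) (F a b)" using assms(1) unfolding dual_mat_def by (rule conjunct1)
  have pn: "p mod n < n" "q mod n < n" using assms(2) by simp_all
  then have c: "clinfun (coprod S T) (F (p mod n) (q mod n))" using cl by blast
  have ad: "\<And>u v. F (p mod n) (q mod n) (u + v) = F (p mod n) (q mod n) u + F (p mod n) (q mod n) v"
    using c unfolding clinfun_def by blast
  let ?x = "X (p div n) (q div n)"
  have "?x = (fst ?x, 0) + (0, snd ?x)" by simp
  then have "F (p mod n) (q mod n) ?x = F (p mod n) (q mod n) (fst ?x, 0) + F (p mod n) (q mod n) (0, snd ?x)"
    using ad by metis
  then show "amp n (\<lambda>x a b. F a b x) X p q = amp n (\<lambda>x a b. F a b (x, 0)) (fstM X) p q + amp n (\<lambda>y a b. F a b (0, y)) (sndM X) p q"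
    by (simp add: amp_def fstM_def sndM_def)
qed

lemma dual_coprod_le:
  assumes F: "dual_mat (coprod S T) n F" and n: "n \<ge> 1"
  shows "dual_mnorm (coprod S T) n F \<le> dual_mnorm S n (\<lambda>a b x. F a b (x, 0)) + dual_mnorm T n (\<lambda>a b y. F a b (0, y))"
  unfolding dual_mnorm_def[of "coprod S T"]
proof (rule cSup_least)
  show "dual_vals (coprod S T) n F \<noteq> {}" using dual_vals_ne[OF oS] dual_vals_S_sub by blast
  fix y assume "y \<in> dual_vals (coprod S T) n F"
  then obtain m X where y: "y = cmnorm (m * n) (amp n (\<lambda>x a b. F a b x) X)" and mX: "m \<ge> 1" "mnorm (coprod S T) m X \<le> 1"
    unfolding dual_vals_mem by (elim exE conjE)
  have bS: "bdd_above (dual_vals S n (\<lambda>a b x. F a b (x, 0)))"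
    using dual_mat_S(1)[OF F] unfolding dual_mat_def by (rule conjunct2)
  have bT: "bdd_above (dual_vals T n (\<lambda>a b y. F a b (0, y)))"
    using dual_mat_T(1)[OF F] unfolding dual_mat_def by (rule conjunct2)
  have mS: "mnorm S m (fstM X) \<le> 1" using S_le_coprod[OF oS oT mX(1), of X] mX(2) by linarith
  have mT: "mnorm T m (sndM X) \<le> 1" using T_le_coprod[OF oS oT mX(1), of X] mX(2) by linarith
  have iS: "cmnorm (m * n) (amp n (\<lambda>x a b. F a b (x, 0)) (fstM X)) \<in> dual_vals S n (\<lambda>a b x. F a b (x, 0))"
    unfolding dual_vals_mem using mX(1) mS by blast
  have iT: "cmnorm (m * n) (amp n (\<lambda>y a b. F a b (0, y)) (sndM X)) \<in> dual_vals T n (\<lambda>a b y. F a b (0, y))"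
    unfolding dual_vals_mem using mX(1) mT by blast
  have "y \<le> cmnorm (m * n) (amp n (\<lambda>x a b. F a b (x, 0)) (fstM X)) + cmnorm (m * n) (amp n (\<lambda>y a b. F a b (0, y)) (sndM X))"
    unfolding y amp_split[OF F n] by (rule cmnorm_add)
  also have "\<dots> \<le> dual_mnorm S n (\<lambda>a b x. F a b (x, 0)) + dual_mnorm T n (\<lambda>a b y. F a b (0, y))"
    unfolding dual_mnorm_def using cSup_upper[OF iS bS] cSup_upper[OF iT bT] by linarith
  finally show "y \<le> dual_mnorm S n (\<lambda>a b x. F a b (x, 0)) + dual_mnorm T n (\<lambda>a b y. F a b (0, y))" .
qed

lemma dual_mpos_coprod:
  assumes F: "dual_mat (coprod S T) n F" and n: "n \<ge> 1"
  shows "dual_mpos (coprod S T) n F \<longleftrightarrow> dual_mpos S n (\<lambda>a b x. F a b (x, 0)) \<and> dual_mpos T n (\<lambda>a b y. F a b (0, y))"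
proof
  assume P: "dual_mpos (coprod S T) n F"
  have P': "\<And>m X. m \<ge> 1 \<Longrightarrow> X \<in> mpos (coprod S T) m \<Longrightarrow> cmpos (m * n) (amp n (\<lambda>x a b. F a b x) X)"
    using P unfolding dual_mpos_def by blast
  show "dual_mpos S n (\<lambda>a b x. F a b (x, 0)) \<and> dual_mpos T n (\<lambda>a b y. F a b (0, y))"
    unfolding dual_mpos_def
  proof (intro conjI allI impI ballI)
    fix m :: nat and X assume m: "1 \<le> m" and X: "X \<in> mpos S m"
    have "(\<lambda>a b. (X a b, 0)) \<in> mpos (coprod S T) m"
      unfolding coprod_mpos fstM_def sndM_def using X osemb_mpos_zero[OF oT m] by simp
    from P'[OF m this] show "cmpos (m * n) (amp n (\<lambda>x a b. F a b (x, 0)) X)" by (simp add: amp_def)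
  next
    fix m :: nat and X assume m: "1 \<le> m" and X: "X \<in> mpos T m"
    have "(\<lambda>a b. (0, X a b)) \<in> mpos (coprod S T) m"
      unfolding coprod_mpos fstM_def sndM_def using X osemb_mpos_zero[OF oS m] by simp
    from P'[OF m this] show "cmpos (m * n) (amp n (\<lambda>y a b. F a b (0, y)) X)" by (simp add: amp_def)
  qed
next
  assume "dual_mpos S n (\<lambda>a b x. F a b (x, 0)) \<and> dual_mpos T n (\<lambda>a b y. F a b (0, y))"
  then have PS: "\<And>m X. m \<ge> 1 \<Longrightarrow> X \<in> mpos S m \<Longrightarrow> cmpos (m * n) (amp n (\<lambda>x a b. F a b (x, 0)) X)"
    and PT: "\<And>m X. m \<ge> 1 \<Longrightarrow> X \<in> mpos T m \<Longrightarrow> cmpos (m * n) (amp n (\<lambda>y a b. F a b (0, y)) X)"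
    unfolding dual_mpos_def by blast+
  show "dual_mpos (coprod S T) n F" unfolding dual_mpos_def
  proof (intro allI impI ballI)
    fix m :: nat and X assume m: "1 \<le> m" and X: "X \<in> mpos (coprod S T) m"
    have X1: "fstM X \<in> mpos S m" and X2: "sndM X \<in> mpos T m" using X coprod_mpos by blast+
    show "cmpos (m * n) (amp n (\<lambda>x a b. F a b x) X)"
      unfolding amp_split[OF F n] by (rule cmpos_add[OF PS[OF m X1] PT[OF m X2]])
  qed
qed

end



definition bdiag :: "(('h \<Rightarrow> complex) \<Rightarrow> ('h \<Rightarrow> complex)) \<Rightarrow> (('k \<Rightarrow> complex) \<Rightarrow> ('k \<Rightarrow> complex))
    \<Rightarrow> (('h + 'k \<Rightarrow> complex) \<Rightarrow> ('h + 'k \<Rightarrow> complex))" where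
  "bdiag A B = (\<lambda>x. if x \<in> l2 then case_sum (A (x \<circ> Inl)) (B (x \<circ> Inr)) else (\<lambda>i. 0))"

lemma bdiag_apply: "x \<in> l2 \<Longrightarrow> bdiag A B x = case_sum (A (x \<circ> Inl)) (B (x \<circ> Inr))"
  by (simp add: bdiag_def)

lemma l2_parts: "x \<in> l2 \<Longrightarrow> x \<circ> Inl \<in> l2 \<and> x \<circ> Inr \<in> l2"
  using l2_split by blast

lemma l2norm_parts: assumes "x \<in> l2" shows "(l2norm x)^2 = (l2norm (x \<circ> Inl))^2 + (l2norm (x \<circ> Inr))^2"
  using l2norm_case_sum[of "x \<circ> Inl" "x \<circ> Inr"] l2_parts[OF assms] by (simp add: case_sum_eta)

lemma case_sum_add: "case_sum (\<lambda>h. a h + b h) (\<lambda>k. c k + d k) = (\<lambda>i. case_sum a c i + case_sum b d i)"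
  by (rule ext) (simp split: sum.split)

lemma case_sum_scale: "case_sum (\<lambda>h. z * a h) (\<lambda>k. z * c k) = (\<lambda>i. z * case_sum a c i)"
  by (rule ext) (simp split: sum.split)

lemma sqrt_sum_sq_le: "0 \<le> a \<Longrightarrow> 0 \<le> b \<Longrightarrow> sqrt (a^2 + b^2) \<le> a + b"
  using sqrt_add_le_add_sqrt[of "a^2" "b^2"] by simp

lemma bdiag_bop:
  assumes A: "A \<in> bop" and B: "B \<in> bop"
  shows "bdiag A B \<in> bop"
  unfolding bop_def
proof (intro CollectI conjI ballI allI impI)
  fix x :: "'a + 'b \<Rightarrow> complex" assume x: "x \<in> l2"
  then show "bdiag A B x \<in> l2" using l2_parts[OF x] bop_l2[OF A] bop_l2[OF B]
    by (simp add: bdiag_apply l2_case_sum)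
next
  fix x y :: "'a + 'b \<Rightarrow> complex" assume x: "x \<in> l2" and y: "y \<in> l2"
  have xy: "(\<lambda>i. x i + y i) \<in> l2" by (rule l2_add(1)[OF x y])
  have e1: "(\<lambda>i. x i + y i) \<circ> Inl = (\<lambda>h. (x \<circ> Inl) h + (y \<circ> Inl) h)" by (simp add: o_def)
  have e2: "(\<lambda>i. x i + y i) \<circ> Inr = (\<lambda>h. (x \<circ> Inr) h + (y \<circ> Inr) h)" by (simp add: o_def)
  show "bdiag A B (\<lambda>i. x i + y i) = (\<lambda>i. bdiag A B x i + bdiag A B y i)"
  proof -
    have a: "A (\<lambda>h. (x \<circ> Inl) h + (y \<circ> Inl) h) = (\<lambda>h. A (x \<circ> Inl) h + A (y \<circ> Inl) h)"
      by (rule bop_add[OF A]) (use l2_parts[OF x] l2_parts[OF y] in \<open>auto simp: o_def\<close>)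
    have b: "B (\<lambda>h. (x \<circ> Inr) h + (y \<circ> Inr) h) = (\<lambda>h. B (x \<circ> Inr) h + B (y \<circ> Inr) h)"
      by (rule bop_add[OF B]) (use l2_parts[OF x] l2_parts[OF y] in \<open>auto simp: o_def\<close>)
    show ?thesis
      unfolding bdiag_apply[OF xy] bdiag_apply[OF x] bdiag_apply[OF y] e1 e2 a b by (rule case_sum_add)
  qed
next
  fix c :: complex and x :: "'a + 'b \<Rightarrow> complex" assume x: "x \<in> l2"
  have cx: "(\<lambda>i. c * x i) \<in> l2" by (rule l2_scale(1)[OF x])
  have e1: "(\<lambda>i. c * x i) \<circ> Inl = (\<lambda>h. c * (x \<circ> Inl) h)" by (simp add: o_def)
  have e2: "(\<lambda>i. c * x i) \<circ> Inr = (\<lambda>h. c * (x \<circ> Inr) h)" by (simp add: o_def)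
  show "bdiag A B (\<lambda>i. c * x i) = (\<lambda>i. c * bdiag A B x i)"
  proof -
    have a: "A (\<lambda>h. c * (x \<circ> Inl) h) = (\<lambda>h. c * A (x \<circ> Inl) h)"
      by (rule bop_scale[OF A]) (use l2_parts[OF x] in \<open>auto simp: o_def\<close>)
    have b: "B (\<lambda>h. c * (x \<circ> Inr) h) = (\<lambda>h. c * B (x \<circ> Inr) h)"
      by (rule bop_scale[OF B]) (use l2_parts[OF x] in \<open>auto simp: o_def\<close>)
    show ?thesis
      unfolding bdiag_apply[OF cx] bdiag_apply[OF x] e1 e2 a b by (rule case_sum_scale)
  qed
next
  fix x :: "'a + 'b \<Rightarrow> complex" assume "x \<notin> l2"
  then show "bdiag A B x = (\<lambda>i. 0)" by (simp add: bdiag_def)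
next
  from bop_bound[OF A] obtain KA where KA: "KA \<ge> 0 \<and> (\<forall>x\<in>l2. l2norm (A x) \<le> KA * l2norm x)" by (rule exE)
  from bop_bound[OF B] obtain KB where KB: "KB \<ge> 0 \<and> (\<forall>x\<in>l2. l2norm (B x) \<le> KB * l2norm x)" by (rule exE)
  have "\<forall>x\<in>l2. l2norm (bdiag A B x) \<le> (KA + KB) * l2norm x"
  proof
    fix x :: "'a + 'b \<Rightarrow> complex" assume x: "x \<in> l2"
    have p: "x \<circ> Inl \<in> l2" "x \<circ> Inr \<in> l2" using l2_parts[OF x] by simp_all
    have KA2: "\<forall>x\<in>l2. l2norm (A x) \<le> KA * l2norm x" using KA by (rule conjunct2)
    have KB2: "\<forall>x\<in>l2. l2norm (B x) \<le> KB * l2norm x" using KB by (rule conjunct2)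
    have a1: "l2norm (A (x \<circ> Inl)) \<le> KA * l2norm (x \<circ> Inl)" by (rule bspec[OF KA2 p(1)])
    have b1: "l2norm (B (x \<circ> Inr)) \<le> KB * l2norm (x \<circ> Inr)" by (rule bspec[OF KB2 p(2)])
    have nx: "(l2norm x)^2 = (l2norm (x \<circ> Inl))^2 + (l2norm (x \<circ> Inr))^2" by (rule l2norm_parts[OF x])
    have "(l2norm (x \<circ> Inl))^2 \<le> (l2norm x)^2" unfolding nx by simp
    then have lx: "l2norm (x \<circ> Inl) \<le> l2norm x" by (rule power2_le_imp_le[OF _ l2norm_nonneg])
    have "(l2norm (x \<circ> Inr))^2 \<le> (l2norm x)^2" unfolding nx by simp
    then have rx: "l2norm (x \<circ> Inr) \<le> l2norm x" by (rule power2_le_imp_le[OF _ l2norm_nonneg])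
    have Al: "A (x \<circ> Inl) \<in> l2" by (rule bop_l2[OF A p(1)])
    have Bl: "B (x \<circ> Inr) \<in> l2" by (rule bop_l2[OF B p(2)])
    have "(l2norm (bdiag A B x))^2 = (l2norm (A (x \<circ> Inl)))^2 + (l2norm (B (x \<circ> Inr)))^2"
      unfolding bdiag_apply[OF x] by (rule l2norm_case_sum[OF Al Bl])
    then have "sqrt ((l2norm (bdiag A B x))^2) = sqrt ((l2norm (A (x \<circ> Inl)))^2 + (l2norm (B (x \<circ> Inr)))^2)"
      by simp
    then have "l2norm (bdiag A B x) = sqrt ((l2norm (A (x \<circ> Inl)))^2 + (l2norm (B (x \<circ> Inr)))^2)"
      using l2norm_nonneg[of "bdiag A B x"] by simp
    also have "\<dots> \<le> l2norm (A (x \<circ> Inl)) + l2norm (B (x \<circ> Inr))"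
      by (rule sqrt_sum_sq_le) (simp_all add: l2norm_nonneg)
    also have "\<dots> \<le> KA * l2norm x + KB * l2norm x"
      using a1 b1 mult_left_mono[OF lx, of KA] mult_left_mono[OF rx, of KB] KA KB by linarith
    also have "\<dots> = (KA + KB) * l2norm x" by (simp add: distrib_right)
    finally show "l2norm (bdiag A B x) \<le> (KA + KB) * l2norm x" .
  qed
  then show "\<exists>K. \<forall>x\<in>l2. l2norm (bdiag A B x) \<le> K * l2norm x" by blast
qed

definition tL :: "(nat \<Rightarrow> 'h + 'k \<Rightarrow> complex) \<Rightarrow> nat \<Rightarrow> 'h \<Rightarrow> complex" where "tL u = (\<lambda>b. u b \<circ> Inl)"
definition tR :: "(nat \<Rightarrow> 'h + 'k \<Rightarrow> complex) \<Rightarrow> nat \<Rightarrow> 'k \<Rightarrow> complex" where "tR u = (\<lambda>b. u b \<circ> Inr)"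

lemma tup_parts: "u \<in> tup_l2 n \<Longrightarrow> tL u \<in> tup_l2 n \<and> tR u \<in> tup_l2 n"
  unfolding tup_l2_def tL_def tR_def using l2_parts by blast

lemma tnorm_case_sum:
  assumes "L \<in> tup_l2 n" "R \<in> tup_l2 n"
  shows "(tnorm n (\<lambda>a. case_sum (L a) (R a)))^2 = (tnorm n L)^2 + (tnorm n R)^2"
proof -
  have "(tnorm n (\<lambda>a. case_sum (L a) (R a)))^2 = (\<Sum>a<n. (l2norm (case_sum (L a) (R a)))^2)" by (rule tnorm_sq)
  also have "\<dots> = (\<Sum>a<n. (l2norm (L a))^2 + (l2norm (R a))^2)"
    by (rule sum.cong) (use assms in \<open>auto simp: tup_l2_def l2norm_case_sum\<close>)
  also have "\<dots> = (tnorm n L)^2 + (tnorm n R)^2" by (simp add: sum.distrib tnorm_sq)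
  finally show ?thesis .
qed

lemma tinner_case_sum:
  assumes "L \<in> tup_l2 n" "R \<in> tup_l2 n" "L' \<in> tup_l2 n" "R' \<in> tup_l2 n"
  shows "tinner n (\<lambda>a. case_sum (L a) (R a)) (\<lambda>a. case_sum (L' a) (R' a)) = tinner n L L' + tinner n R R'"
  unfolding tinner_def using assms
  by (simp add: sum.distrib[symmetric] tup_l2_def l2inner_case_sum)

lemma tup_eta: "u = (\<lambda>a. case_sum (tL u a) (tR u a))"
  unfolding tL_def tR_def by (simp add: case_sum_eta)

lemma tapply_bdiag:
  assumes "u \<in> tup_l2 n"
  shows "tapply n (\<lambda>a b. bdiag (A a b) (B a b)) u = (\<lambda>a. case_sum (tapply n A (tL u) a) (tapply n B (tR u) a))"
proof (intro ext)
  fix a i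
  have ul: "\<And>b. b \<in> {..<n} \<Longrightarrow> u b \<in> l2" using assms unfolding tup_l2_def by blast
  have "tapply n (\<lambda>a b. bdiag (A a b) (B a b)) u a i = (\<Sum>b<n. case_sum (A a b (u b \<circ> Inl)) (B a b (u b \<circ> Inr)) i)"
    unfolding tapply_def by (rule sum.cong) (simp_all add: bdiag_apply ul)
  also have "\<dots> = case_sum (tapply n A (tL u) a) (tapply n B (tR u) a) i"
    by (cases i) (simp_all add: tapply_def tL_def tR_def)
  finally show "tapply n (\<lambda>a b. bdiag (A a b) (B a b)) u a i = case_sum (tapply n A (tL u) a) (tapply n B (tR u) a) i" .
qed

lemma tnorm_parts: assumes "u \<in> tup_l2 n" shows "(tnorm n u)^2 = (tnorm n (tL u))^2 + (tnorm n (tR u))^2"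
  using tnorm_case_sum[of "tL u" n "tR u"] tup_parts[OF assms] tup_eta[of u] by simp



definition embL :: "(nat \<Rightarrow> 'h \<Rightarrow> complex) \<Rightarrow> nat \<Rightarrow> 'h + 'k \<Rightarrow> complex" where
  "embL u = (\<lambda>b. case_sum (u b) (\<lambda>k. 0))"
definition embR :: "(nat \<Rightarrow> 'k \<Rightarrow> complex) \<Rightarrow> nat \<Rightarrow> 'h + 'k \<Rightarrow> complex" where
  "embR u = (\<lambda>b. case_sum (\<lambda>h. 0) (u b))"

lemma embL_parts: "tL (embL u) = u" "tR (embL u) = (\<lambda>b k. 0)"
  unfolding tL_def tR_def embL_def by (auto simp: o_def)
lemma embR_parts: "tL (embR u) = (\<lambda>b k. 0)" "tR (embR u) = u"
  unfolding tL_def tR_def embR_def by (auto simp: o_def)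

lemma embL_eta: "embL u = (\<lambda>a. case_sum (u a) ((\<lambda>b k. 0) a))" unfolding embL_def by simp
lemma embR_eta: "embR u = (\<lambda>a. case_sum ((\<lambda>b h. 0) a) (u a))" unfolding embR_def by simp

lemma embL_tup: "u \<in> tup_l2 n \<Longrightarrow> embL u \<in> tup_l2 n"
  unfolding tup_l2_def embL_def by (simp add: l2_case_sum l2_zero)
lemma embR_tup: "u \<in> tup_l2 n \<Longrightarrow> embR u \<in> tup_l2 n"
  unfolding tup_l2_def embR_def by (simp add: l2_case_sum l2_zero)

lemma sq_eq_nonneg: "x^2 = y^2 \<Longrightarrow> 0 \<le> x \<Longrightarrow> 0 \<le> (y::real) \<Longrightarrow> x = y"
  by (simp add: power2_eq_iff_nonneg)

lemma embL_tnorm: fixes u :: "nat \<Rightarrow> 'h \<Rightarrow> complex" assumes u: "u \<in> tup_l2 n" shows "tnorm n (embL u :: nat \<Rightarrow> 'h + 'k \<Rightarrow> complex) = tnorm n u"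
proof -
  have "(tnorm n (embL u :: nat \<Rightarrow> 'h + 'k \<Rightarrow> complex))^2 = (tnorm n (tL (embL u :: nat \<Rightarrow> 'h + 'k \<Rightarrow> complex)))^2 + (tnorm n (tR (embL u :: nat \<Rightarrow> 'h + 'k \<Rightarrow> complex)))^2"
    by (rule tnorm_parts[OF embL_tup[OF u]])
  also have "\<dots> = (tnorm n u)^2" by (simp add: embL_parts zero_tup)
  finally show ?thesis by (rule sq_eq_nonneg) (simp_all add: tnorm_nonneg)
qed

lemma embR_tnorm: fixes u :: "nat \<Rightarrow> 'k \<Rightarrow> complex" assumes u: "u \<in> tup_l2 n" shows "tnorm n (embR u :: nat \<Rightarrow> 'h + 'k \<Rightarrow> complex) = tnorm n u"
proof -
  have "(tnorm n (embR u :: nat \<Rightarrow> 'h + 'k \<Rightarrow> complex))^2 = (tnorm n (tL (embR u :: nat \<Rightarrow> 'h + 'k \<Rightarrow> complex)))^2 + (tnorm n (tR (embR u :: nat \<Rightarrow> 'h + 'k \<Rightarrow> complex)))^2"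
    by (rule tnorm_parts[OF embR_tup[OF u]])
  also have "\<dots> = (tnorm n u)^2" by (simp add: embR_parts zero_tup)
  finally show ?thesis by (rule sq_eq_nonneg) (simp_all add: tnorm_nonneg)
qed

lemma tapply_zero_norm:
  assumes "\<And>a b. a < n \<Longrightarrow> b < n \<Longrightarrow> B a b \<in> bop"
  shows "tnorm n (tapply n B (\<lambda>b k. 0)) = 0"
proof -
  have "\<And>a. a \<in> {..<n} \<Longrightarrow> tapply n B (\<lambda>b k. 0) a = (\<lambda>k. 0)"
  proof -
    fix a assume a: "a \<in> {..<n}"
    then have "\<And>b. b \<in> {..<n} \<Longrightarrow> B a b (\<lambda>k. 0) = (\<lambda>k. 0)" using assms bop_zero by blast
    then show "tapply n B (\<lambda>b k. 0) a = (\<lambda>k. 0)" unfolding tapply_def by (intro ext) simp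
  qed
  then show ?thesis unfolding tnorm_def by (simp add: l2_zero)
qed

lemma tinner_zero2: "tinner n W (\<lambda>k i. 0) = 0"
  by (simp add: tinner_def l2inner_def)

context
  fixes n :: nat and A :: "nat \<Rightarrow> nat \<Rightarrow> ('h \<Rightarrow> complex) \<Rightarrow> ('h \<Rightarrow> complex)"
    and B :: "nat \<Rightarrow> nat \<Rightarrow> ('k \<Rightarrow> complex) \<Rightarrow> ('k \<Rightarrow> complex)"
  assumes Ab: "\<And>a b. a < n \<Longrightarrow> b < n \<Longrightarrow> A a b \<in> bop"
    and Bb: "\<And>a b. a < n \<Longrightarrow> b < n \<Longrightarrow> B a b \<in> bop"
begin

lemma Phib: "\<And>a b. a < n \<Longrightarrow> b < n \<Longrightarrow> bdiag (A a b) (B a b) \<in> bop"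
  by (intro bdiag_bop Ab Bb)

lemma Phi_norm_sq:
  assumes u: "u \<in> tup_l2 n"
  shows "(tnorm n (tapply n (\<lambda>a b. bdiag (A a b) (B a b)) u))^2
       = (tnorm n (tapply n A (tL u)))^2 + (tnorm n (tapply n B (tR u)))^2"
proof -
  have p: "tL u \<in> tup_l2 n" "tR u \<in> tup_l2 n" using tup_parts[OF u] by simp_all
  have a: "tapply n A (tL u) \<in> tup_l2 n" by (rule tapply_l2[OF _ p(1)]) (rule Ab)
  have b: "tapply n B (tR u) \<in> tup_l2 n" by (rule tapply_l2[OF _ p(2)]) (rule Bb)
  show ?thesis unfolding tapply_bdiag[OF u] by (rule tnorm_case_sum[OF a b])
qed

lemma Phi_mnorm_le: "bop_mnorm n (\<lambda>a b. bdiag (A a b) (B a b)) \<le> bop_mnorm n A + bop_mnorm n B"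
proof (rule bop_mnorm_le)
  fix u :: "nat \<Rightarrow> 'h + 'k \<Rightarrow> complex" assume u: "u \<in> tup_l2 n" "tnorm n u \<le> 1"
  have p: "tL u \<in> tup_l2 n" "tR u \<in> tup_l2 n" using tup_parts[OF u(1)] by simp_all
  have ss: "(tnorm n (tL u))^2 + (tnorm n (tR u))^2 \<le> 1"
    using tnorm_parts[OF u(1)] power_mono[OF u(2) tnorm_nonneg, of 2] by simp
  have "(tnorm n (tL u))^2 \<le> 1^2" unfolding power_one using ss zero_le_power2[of "tnorm n (tR u)"] by linarith
  then have nL: "tnorm n (tL u) \<le> 1" by (rule power2_le_imp_le) simp
  have "(tnorm n (tR u))^2 \<le> 1^2" unfolding power_one using ss zero_le_power2[of "tnorm n (tL u)"] by linarith
  then have nR: "tnorm n (tR u) \<le> 1" by (rule power2_le_imp_le) simp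
  let ?a = "tnorm n (tapply n A (tL u))" and ?b = "tnorm n (tapply n B (tR u))"
  have "sqrt ((tnorm n (tapply n (\<lambda>a b. bdiag (A a b) (B a b)) u))^2) = sqrt (?a^2 + ?b^2)"
    using Phi_norm_sq[OF u(1)] by simp
  then have "tnorm n (tapply n (\<lambda>a b. bdiag (A a b) (B a b)) u) = sqrt (?a^2 + ?b^2)"
    using tnorm_nonneg[of n "tapply n (\<lambda>a b. bdiag (A a b) (B a b)) u"] by simp
  also have "\<dots> \<le> ?a + ?b" by (rule sqrt_sum_sq_le) (simp_all add: tnorm_nonneg)
  also have "\<dots> \<le> bop_mnorm n A + bop_mnorm n B"
  proof -
    have "?a \<le> bop_mnorm n A" by (rule bop_mnorm_ge[OF _ p(1) nL]) (rule Ab)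
    moreover have "?b \<le> bop_mnorm n B" by (rule bop_mnorm_ge[OF _ p(2) nR]) (rule Bb)
    ultimately show ?thesis by linarith
  qed
  finally show "tnorm n (tapply n (\<lambda>a b. bdiag (A a b) (B a b)) u) \<le> bop_mnorm n A + bop_mnorm n B" .
qed

lemma Phi_mnorm_geA: "bop_mnorm n A \<le> bop_mnorm n (\<lambda>a b. bdiag (A a b) (B a b))"
proof (rule bop_mnorm_le)
  fix u :: "nat \<Rightarrow> 'h \<Rightarrow> complex" assume u: "u \<in> tup_l2 n" "tnorm n u \<le> 1"
  let ?v = "embL u :: nat \<Rightarrow> 'h + 'k \<Rightarrow> complex"
  have v1: "?v \<in> tup_l2 n" by (rule embL_tup[OF u(1)])
  have v2: "tnorm n ?v = tnorm n u" by (rule embL_tnorm[OF u(1)])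
  have v: "?v \<in> tup_l2 n" "tnorm n ?v \<le> 1" using v1 v2 u(2) by simp_all
  have "(tnorm n (tapply n (\<lambda>a b. bdiag (A a b) (B a b)) ?v))^2 = (tnorm n (tapply n A u))^2"
  proof -
    have z: "tnorm n (tapply n B (\<lambda>b k. 0)) = 0" by (rule tapply_zero_norm) (rule Bb)
    show ?thesis using Phi_norm_sq[OF v(1)] by (simp add: embL_parts z)
  qed
  then have "tnorm n (tapply n A u) = tnorm n (tapply n (\<lambda>a b. bdiag (A a b) (B a b)) ?v)"
    by (rule sq_eq_nonneg[symmetric]) (simp_all add: tnorm_nonneg)
  also have "\<dots> \<le> bop_mnorm n (\<lambda>a b. bdiag (A a b) (B a b))"
    by (rule bop_mnorm_ge[OF _ v(1) v(2)]) (rule Phib)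
  finally show "tnorm n (tapply n A u) \<le> bop_mnorm n (\<lambda>a b. bdiag (A a b) (B a b))" .
qed

lemma Phi_mnorm_geB: "bop_mnorm n B \<le> bop_mnorm n (\<lambda>a b. bdiag (A a b) (B a b))"
proof (rule bop_mnorm_le)
  fix u :: "nat \<Rightarrow> 'k \<Rightarrow> complex" assume u: "u \<in> tup_l2 n" "tnorm n u \<le> 1"
  let ?v = "embR u :: nat \<Rightarrow> 'h + 'k \<Rightarrow> complex"
  have v1: "?v \<in> tup_l2 n" by (rule embR_tup[OF u(1)])
  have v2: "tnorm n ?v = tnorm n u" by (rule embR_tnorm[OF u(1)])
  have v: "?v \<in> tup_l2 n" "tnorm n ?v \<le> 1" using v1 v2 u(2) by simp_all
  have "(tnorm n (tapply n (\<lambda>a b. bdiag (A a b) (B a b)) ?v))^2 = (tnorm n (tapply n B u))^2"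
  proof -
    have z: "tnorm n (tapply n A (\<lambda>b k. 0)) = 0" by (rule tapply_zero_norm) (rule Ab)
    show ?thesis using Phi_norm_sq[OF v(1)] by (simp add: embR_parts z)
  qed
  then have "tnorm n (tapply n B u) = tnorm n (tapply n (\<lambda>a b. bdiag (A a b) (B a b)) ?v)"
    by (rule sq_eq_nonneg[symmetric]) (simp_all add: tnorm_nonneg)
  also have "\<dots> \<le> bop_mnorm n (\<lambda>a b. bdiag (A a b) (B a b))"
    by (rule bop_mnorm_ge[OF _ v(1) v(2)]) (rule Phib)
  finally show "tnorm n (tapply n B u) \<le> bop_mnorm n (\<lambda>a b. bdiag (A a b) (B a b))" .
qed

lemma Phi_inner:
  assumes u: "u \<in> tup_l2 n"
  shows "tinner n (tapply n (\<lambda>a b. bdiag (A a b) (B a b)) u) u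
       = tinner n (tapply n A (tL u)) (tL u) + tinner n (tapply n B (tR u)) (tR u)"
proof -
  have ue: "(\<lambda>a. case_sum (tL u a) (tR u a)) = u" by (rule tup_eta[symmetric])
  have p: "tL u \<in> tup_l2 n" "tR u \<in> tup_l2 n" using tup_parts[OF u] by simp_all
  have "tinner n (\<lambda>a. case_sum (tapply n A (tL u) a) (tapply n B (tR u) a)) (\<lambda>a. case_sum (tL u a) (tR u a))
      = tinner n (tapply n A (tL u)) (tL u) + tinner n (tapply n B (tR u)) (tR u)"
  proof -
    have a: "tapply n A (tL u) \<in> tup_l2 n" by (rule tapply_l2[OF _ p(1)]) (rule Ab)
    have b: "tapply n B (tR u) \<in> tup_l2 n" by (rule tapply_l2[OF _ p(2)]) (rule Bb)
    show ?thesis by (rule tinner_case_sum[OF a b p])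
  qed
  then show ?thesis unfolding tapply_bdiag[OF u] by (simp only: ue)
qed

lemma Phi_pos: "bop_mpos n (\<lambda>a b. bdiag (A a b) (B a b)) \<longleftrightarrow> bop_mpos n A \<and> bop_mpos n B"
proof
  assume P: "bop_mpos n (\<lambda>a b. bdiag (A a b) (B a b))"
  show "bop_mpos n A \<and> bop_mpos n B"
  proof
    show "bop_mpos n A" unfolding bop_mpos_def
    proof
      fix u :: "nat \<Rightarrow> 'h \<Rightarrow> complex" assume u: "u \<in> tup_l2 n"
      let ?v = "embL u :: nat \<Rightarrow> 'h + 'k \<Rightarrow> complex"
      have v: "?v \<in> tup_l2 n" by (rule embL_tup[OF u])
      have H: "Im (tinner n (tapply n (\<lambda>a b. bdiag (A a b) (B a b)) ?v) ?v) = 0 \<and> 0 \<le> Re (tinner n (tapply n (\<lambda>a b. bdiag (A a b) (B a b)) ?v) ?v)"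
        using P v unfolding bop_mpos_def by (rule bspec)
      have E: "tinner n (tapply n (\<lambda>a b. bdiag (A a b) (B a b)) ?v) ?v = tinner n (tapply n A u) u"
        using Phi_inner[OF v] by (simp add: embL_parts tinner_zero2)
      show "Im (tinner n (tapply n A u) u) = 0 \<and> 0 \<le> Re (tinner n (tapply n A u) u)"
        using H unfolding E .
    qed
    show "bop_mpos n B" unfolding bop_mpos_def
    proof
      fix u :: "nat \<Rightarrow> 'k \<Rightarrow> complex" assume u: "u \<in> tup_l2 n"
      let ?v = "embR u :: nat \<Rightarrow> 'h + 'k \<Rightarrow> complex"
      have v: "?v \<in> tup_l2 n" by (rule embR_tup[OF u])
      have H: "Im (tinner n (tapply n (\<lambda>a b. bdiag (A a b) (B a b)) ?v) ?v) = 0 \<and> 0 \<le> Re (tinner n (tapply n (\<lambda>a b. bdiag (A a b) (B a b)) ?v) ?v)"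
        using P v unfolding bop_mpos_def by (rule bspec)
      have E: "tinner n (tapply n (\<lambda>a b. bdiag (A a b) (B a b)) ?v) ?v = tinner n (tapply n B u) u"
        using Phi_inner[OF v] by (simp add: embR_parts tinner_zero2)
      show "Im (tinner n (tapply n B u) u) = 0 \<and> 0 \<le> Re (tinner n (tapply n B u) u)"
        using H unfolding E .
    qed
  qed
next
  assume "bop_mpos n A \<and> bop_mpos n B"
  then have PA: "bop_mpos n A" and PB: "bop_mpos n B" by simp_all
  show "bop_mpos n (\<lambda>a b. bdiag (A a b) (B a b))" unfolding bop_mpos_def
  proof
    fix u :: "nat \<Rightarrow> 'h + 'k \<Rightarrow> complex" assume u: "u \<in> tup_l2 n"
    have p: "tL u \<in> tup_l2 n" "tR u \<in> tup_l2 n" using tup_parts[OF u] by simp_all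
    have a: "Im (tinner n (tapply n A (tL u)) (tL u)) = 0 \<and> 0 \<le> Re (tinner n (tapply n A (tL u)) (tL u))"
      using PA p(1) unfolding bop_mpos_def by blast
    have b: "Im (tinner n (tapply n B (tR u)) (tR u)) = 0 \<and> 0 \<le> Re (tinner n (tapply n B (tR u)) (tR u))"
      using PB p(2) unfolding bop_mpos_def by blast
    show "Im (tinner n (tapply n (\<lambda>a b. bdiag (A a b) (B a b)) u) u) = 0 \<and>
          0 \<le> Re (tinner n (tapply n (\<lambda>a b. bdiag (A a b) (B a b)) u) u)"
      unfolding Phi_inner[OF u] using a b by simp
  qed
qed

end



lemma bdiag_add:
  "bdiag (\<lambda>u i. A1 u i + A2 u i) (\<lambda>u i. B1 u i + B2 u i) = (\<lambda>u i. bdiag A1 B1 u i + bdiag A2 B2 u i)"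
  by (intro ext) (simp add: bdiag_def split: sum.split)

lemma bdiag_scale:
  "bdiag (\<lambda>u i. c * A1 u i) (\<lambda>u i. c * B1 u i) = (\<lambda>u i. c * bdiag A1 B1 u i)"
  by (intro ext) (simp add: bdiag_def split: sum.split)

lemma entries_S:
  assumes oS: "osemb S jS" and oT: "osemb T jT" and F: "dual_mat (coprod S T) n F"
    and S1: "\<forall>f. dual_mat S 1 (\<lambda>_ _. f) \<longrightarrow> PS f \<in> bop"
  shows "\<And>a b. a < n \<Longrightarrow> b < n \<Longrightarrow> PS (\<lambda>x. F a b (x, 0)) \<in> bop"
proof -
  fix a b assume a: "a < n" and b: "b < n"
  have "dual_mat S n (\<lambda>a b x. F a b (x, 0))" by (rule dual_mat_S(1)[OF oS oT F])
  then have "dual_mat S 1 (\<lambda>_ _. (\<lambda>x. F a b (x, 0)))" by (rule dual_mat_entry[OF _ a b])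
  then show "PS (\<lambda>x. F a b (x, 0)) \<in> bop" using S1 by blast
qed

lemma entries_T:
  assumes oS: "osemb S jS" and oT: "osemb T jT" and F: "dual_mat (coprod S T) n F"
    and T1: "\<forall>f. dual_mat T 1 (\<lambda>_ _. f) \<longrightarrow> PT f \<in> bop"
  shows "\<And>a b. a < n \<Longrightarrow> b < n \<Longrightarrow> PT (\<lambda>y. F a b (0, y)) \<in> bop"
proof -
  fix a b assume a: "a < n" and b: "b < n"
  have "dual_mat T n (\<lambda>a b y. F a b (0, y))" by (rule dual_mat_T(1)[OF oS oT F])
  then have "dual_mat T 1 (\<lambda>_ _. (\<lambda>y. F a b (0, y)))" by (rule dual_mat_entry[OF _ a b])
  then show "PT (\<lambda>y. F a b (0, y)) \<in> bop" using T1 by blast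
qed

theorem proposition9p5:
  fixes S :: "('a::ab_group_add) mstruct" and T :: "('b::ab_group_add) mstruct"
  assumes "operator_system TYPE('i) S"
    and "operator_system TYPE('j) T"
    and "dualizable TYPE('h) S"
    and "dualizable TYPE('k) T"
  shows "dualizable TYPE('h + 'k) (coprod S T)"
proof -
  obtain jS :: "'a \<Rightarrow> ('i \<Rightarrow> complex) \<Rightarrow> ('i \<Rightarrow> complex)" where oS: "osemb S jS" by (rule os_obtain[OF assms(1)])
  obtain jT :: "'b \<Rightarrow> ('j \<Rightarrow> complex) \<Rightarrow> ('j \<Rightarrow> complex)" where oT: "osemb T jT" by (rule os_obtain[OF assms(2)])
  from assms(3)[unfolded dualizable_def] obtain PS :: "('a \<Rightarrow> complex) \<Rightarrow> ('h \<Rightarrow> complex) \<Rightarrow> ('h \<Rightarrow> complex)"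
    where HS: "(\<forall>f. dual_mat S 1 (\<lambda>_ _. f) \<longrightarrow> PS f \<in> bop)
    \<and> (\<forall>f g. dual_mat S 1 (\<lambda>_ _. f) \<and> dual_mat S 1 (\<lambda>_ _. g)
          \<longrightarrow> PS (\<lambda>x. f x + g x) = (\<lambda>u i. PS f u i + PS g u i))
    \<and> (\<forall>c f. dual_mat S 1 (\<lambda>_ _. f) \<longrightarrow> PS (\<lambda>x. c * f x) = (\<lambda>u i. c * PS f u i))
    \<and> (\<exists>K. \<forall>n\<ge>1. \<forall>F. dual_mat S n F \<longrightarrow>
          bop_mnorm n (\<lambda>a b. PS (F a b)) \<le> K * dual_mnorm S n F)
    \<and> (\<exists>c>0. \<forall>n\<ge>1. \<forall>F. dual_mat S n F \<longrightarrow>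
          c * dual_mnorm S n F \<le> bop_mnorm n (\<lambda>a b. PS (F a b)))
    \<and> (\<forall>n\<ge>1. \<forall>F. dual_mat S n F \<longrightarrow>
          (dual_mpos S n F \<longleftrightarrow> bop_mpos n (\<lambda>a b. PS (F a b))))" by (rule exE)
  from assms(4)[unfolded dualizable_def] obtain PT :: "('b \<Rightarrow> complex) \<Rightarrow> ('k \<Rightarrow> complex) \<Rightarrow> ('k \<Rightarrow> complex)"
    where HT: "(\<forall>f. dual_mat T 1 (\<lambda>_ _. f) \<longrightarrow> PT f \<in> bop)
    \<and> (\<forall>f g. dual_mat T 1 (\<lambda>_ _. f) \<and> dual_mat T 1 (\<lambda>_ _. g)
          \<longrightarrow> PT (\<lambda>x. f x + g x) = (\<lambda>u i. PT f u i + PT g u i))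
    \<and> (\<forall>c f. dual_mat T 1 (\<lambda>_ _. f) \<longrightarrow> PT (\<lambda>x. c * f x) = (\<lambda>u i. c * PT f u i))
    \<and> (\<exists>K. \<forall>n\<ge>1. \<forall>F. dual_mat T n F \<longrightarrow>
          bop_mnorm n (\<lambda>a b. PT (F a b)) \<le> K * dual_mnorm T n F)
    \<and> (\<exists>c>0. \<forall>n\<ge>1. \<forall>F. dual_mat T n F \<longrightarrow>
          c * dual_mnorm T n F \<le> bop_mnorm n (\<lambda>a b. PT (F a b)))
    \<and> (\<forall>n\<ge>1. \<forall>F. dual_mat T n F \<longrightarrow>
          (dual_mpos T n F \<longleftrightarrow> bop_mpos n (\<lambda>a b. PT (F a b))))" by (rule exE)
  have S1: "\<forall>f. dual_mat S 1 (\<lambda>_ _. f) \<longrightarrow> PS f \<in> bop" using HS by (elim conjE)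
  have S2: "\<forall>f g. dual_mat S 1 (\<lambda>_ _. f) \<and> dual_mat S 1 (\<lambda>_ _. g)
          \<longrightarrow> PS (\<lambda>x. f x + g x) = (\<lambda>u i. PS f u i + PS g u i)" using HS by (elim conjE)
  have S3: "\<forall>c f. dual_mat S 1 (\<lambda>_ _. f) \<longrightarrow> PS (\<lambda>x. c * f x) = (\<lambda>u i. c * PS f u i)" using HS by (elim conjE)
  have S4: "\<exists>K. \<forall>n\<ge>1. \<forall>F. dual_mat S n F \<longrightarrow>
          bop_mnorm n (\<lambda>a b. PS (F a b)) \<le> K * dual_mnorm S n F" using HS by (elim conjE)
  have S5: "\<exists>c>0. \<forall>n\<ge>1. \<forall>F. dual_mat S n F \<longrightarrow>
          c * dual_mnorm S n F \<le> bop_mnorm n (\<lambda>a b. PS (F a b))" using HS by (elim conjE)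
  have S6: "\<forall>n\<ge>1. \<forall>F. dual_mat S n F \<longrightarrow>
          (dual_mpos S n F \<longleftrightarrow> bop_mpos n (\<lambda>a b. PS (F a b)))" using HS by (elim conjE)
  have T1: "\<forall>f. dual_mat T 1 (\<lambda>_ _. f) \<longrightarrow> PT f \<in> bop" using HT by (elim conjE)
  have T2: "\<forall>f g. dual_mat T 1 (\<lambda>_ _. f) \<and> dual_mat T 1 (\<lambda>_ _. g)
          \<longrightarrow> PT (\<lambda>x. f x + g x) = (\<lambda>u i. PT f u i + PT g u i)" using HT by (elim conjE)
  have T3: "\<forall>c f. dual_mat T 1 (\<lambda>_ _. f) \<longrightarrow> PT (\<lambda>x. c * f x) = (\<lambda>u i. c * PT f u i)" using HT by (elim conjE)
  have T4: "\<exists>K. \<forall>n\<ge>1. \<forall>F. dual_mat T n F \<longrightarrow>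
          bop_mnorm n (\<lambda>a b. PT (F a b)) \<le> K * dual_mnorm T n F" using HT by (elim conjE)
  have T5: "\<exists>c>0. \<forall>n\<ge>1. \<forall>F. dual_mat T n F \<longrightarrow>
          c * dual_mnorm T n F \<le> bop_mnorm n (\<lambda>a b. PT (F a b))" using HT by (elim conjE)
  have T6: "\<forall>n\<ge>1. \<forall>F. dual_mat T n F \<longrightarrow>
          (dual_mpos T n F \<longleftrightarrow> bop_mpos n (\<lambda>a b. PT (F a b)))" using HT by (elim conjE)
  from S4 obtain KS where KS: "\<forall>n\<ge>1. \<forall>F. dual_mat S n F \<longrightarrow>
          bop_mnorm n (\<lambda>a b. PS (F a b)) \<le> KS * dual_mnorm S n F" by (rule exE)
  from T4 obtain KT where KT: "\<forall>n\<ge>1. \<forall>F. dual_mat T n F \<longrightarrow>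
          bop_mnorm n (\<lambda>a b. PT (F a b)) \<le> KT * dual_mnorm T n F" by (rule exE)
  from S5 obtain cS where cS: "cS > 0 \<and> (\<forall>n\<ge>1. \<forall>F. dual_mat S n F \<longrightarrow>
          cS * dual_mnorm S n F \<le> bop_mnorm n (\<lambda>a b. PS (F a b)))" by (rule exE)
  from T5 obtain cT where cT: "cT > 0 \<and> (\<forall>n\<ge>1. \<forall>F. dual_mat T n F \<longrightarrow>
          cT * dual_mnorm T n F \<le> bop_mnorm n (\<lambda>a b. PT (F a b)))" by (rule exE)
  define Phi :: "('a \<times> 'b \<Rightarrow> complex) \<Rightarrow> ('h + 'k \<Rightarrow> complex) \<Rightarrow> ('h + 'k \<Rightarrow> complex)" where
    "Phi f = bdiag (PS (\<lambda>x. f (x, 0))) (PT (\<lambda>y. f (0, y)))" for f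
  show ?thesis unfolding dualizable_def
  proof (rule exI[of _ Phi], intro conjI allI impI)
    fix f assume f: "dual_mat (coprod S T) 1 (\<lambda>_ _. f)"
    have a: "PS (\<lambda>x. f (x, 0)) \<in> bop" by (rule entries_S[OF oS oT f S1]) simp_all
    have b: "PT (\<lambda>y. f (0, y)) \<in> bop" by (rule entries_T[OF oS oT f T1]) simp_all
    show "Phi f \<in> bop" unfolding Phi_def by (rule bdiag_bop[OF a b])
  next
    fix f g assume fg: "dual_mat (coprod S T) 1 (\<lambda>_ _. f) \<and> dual_mat (coprod S T) 1 (\<lambda>_ _. g)"
    have f: "dual_mat (coprod S T) 1 (\<lambda>_ _. f)" and g: "dual_mat (coprod S T) 1 (\<lambda>_ _. g)" using fg by simp_all
    have fS: "dual_mat S 1 (\<lambda>_ _. (\<lambda>x. f (x, 0)))" by (rule dual_mat_S(1)[OF oS oT f])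
    have gS: "dual_mat S 1 (\<lambda>_ _. (\<lambda>x. g (x, 0)))" by (rule dual_mat_S(1)[OF oS oT g])
    have fT: "dual_mat T 1 (\<lambda>_ _. (\<lambda>y. f (0, y)))" by (rule dual_mat_T(1)[OF oS oT f])
    have gT: "dual_mat T 1 (\<lambda>_ _. (\<lambda>y. g (0, y)))" by (rule dual_mat_T(1)[OF oS oT g])
    have eS: "PS (\<lambda>x. f (x, 0) + g (x, 0)) = (\<lambda>u i. PS (\<lambda>x. f (x, 0)) u i + PS (\<lambda>x. g (x, 0)) u i)"
      using S2 fS gS by blast
    have eT: "PT (\<lambda>y. f (0, y) + g (0, y)) = (\<lambda>u i. PT (\<lambda>y. f (0, y)) u i + PT (\<lambda>y. g (0, y)) u i)"
      using T2 fT gT by blast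
    show "Phi (\<lambda>x. f x + g x) = (\<lambda>u i. Phi f u i + Phi g u i)"
      unfolding Phi_def eS eT by (rule bdiag_add)
  next
    fix c f assume f: "dual_mat (coprod S T) 1 (\<lambda>_ _. f)"
    have fS: "dual_mat S 1 (\<lambda>_ _. (\<lambda>x. f (x, 0)))" by (rule dual_mat_S(1)[OF oS oT f])
    have fT: "dual_mat T 1 (\<lambda>_ _. (\<lambda>y. f (0, y)))" by (rule dual_mat_T(1)[OF oS oT f])
    have eS: "PS (\<lambda>x. c * f (x, 0)) = (\<lambda>u i. c * PS (\<lambda>x. f (x, 0)) u i)" using S3 fS by blast
    have eT: "PT (\<lambda>y. c * f (0, y)) = (\<lambda>u i. c * PT (\<lambda>y. f (0, y)) u i)" using T3 fT by blast
    show "Phi (\<lambda>x. c * f x) = (\<lambda>u i. c * Phi f u i)"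
      unfolding Phi_def eS eT by (rule bdiag_scale)
  next
    show "\<exists>K. \<forall>n\<ge>1. \<forall>F. dual_mat (coprod S T) n F \<longrightarrow>
          bop_mnorm n (\<lambda>a b. Phi (F a b)) \<le> K * dual_mnorm (coprod S T) n F"
    proof (rule exI[of _ "max KS 0 + max KT 0"], intro allI impI)
      fix n :: nat and F assume n: "1 \<le> n" and F: "dual_mat (coprod S T) n F"
      let ?A = "\<lambda>a b. PS (\<lambda>x. F a b (x, 0))" and ?B = "\<lambda>a b. PT (\<lambda>y. F a b (0, y))"
      have Ab: "\<And>a b. a < n \<Longrightarrow> b < n \<Longrightarrow> ?A a b \<in> bop" by (rule entries_S[OF oS oT F S1])
      have Bb: "\<And>a b. a < n \<Longrightarrow> b < n \<Longrightarrow> ?B a b \<in> bop" by (rule entries_T[OF oS oT F T1])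
      have FS: "dual_mat S n (\<lambda>a b x. F a b (x, 0))" by (rule dual_mat_S(1)[OF oS oT F])
      have FT: "dual_mat T n (\<lambda>a b y. F a b (0, y))" by (rule dual_mat_T(1)[OF oS oT F])
      have dS: "dual_mnorm S n (\<lambda>a b x. F a b (x, 0)) \<le> dual_mnorm (coprod S T) n F" by (rule dual_mat_S(2)[OF oS oT F])
      have dT: "dual_mnorm T n (\<lambda>a b y. F a b (0, y)) \<le> dual_mnorm (coprod S T) n F" by (rule dual_mat_T(2)[OF oS oT F])
      have dS0: "0 \<le> dual_mnorm S n (\<lambda>a b x. F a b (x, 0))" by (rule dual_mnorm_nonneg[OF oS FS])
      have dT0: "0 \<le> dual_mnorm T n (\<lambda>a b y. F a b (0, y))" by (rule dual_mnorm_nonneg[OF oT FT])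
      have kS: "bop_mnorm n ?A \<le> KS * dual_mnorm S n (\<lambda>a b x. F a b (x, 0))" using KS n FS by blast
      have kT: "bop_mnorm n ?B \<le> KT * dual_mnorm T n (\<lambda>a b y. F a b (0, y))" using KT n FT by blast
      have "bop_mnorm n (\<lambda>a b. Phi (F a b)) \<le> bop_mnorm n ?A + bop_mnorm n ?B"
        unfolding Phi_def by (rule Phi_mnorm_le[of n ?A ?B, OF Ab Bb])
      also have "\<dots> \<le> max KS 0 * dual_mnorm (coprod S T) n F + max KT 0 * dual_mnorm (coprod S T) n F"
      proof -
        have "KS * dual_mnorm S n (\<lambda>a b x. F a b (x, 0)) \<le> max KS 0 * dual_mnorm S n (\<lambda>a b x. F a b (x, 0))"
          by (rule mult_right_mono[OF _ dS0]) simp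
        also have "\<dots> \<le> max KS 0 * dual_mnorm (coprod S T) n F" by (rule mult_left_mono[OF dS]) simp
        finally have 1: "KS * dual_mnorm S n (\<lambda>a b x. F a b (x, 0)) \<le> max KS 0 * dual_mnorm (coprod S T) n F" .
        have "KT * dual_mnorm T n (\<lambda>a b y. F a b (0, y)) \<le> max KT 0 * dual_mnorm T n (\<lambda>a b y. F a b (0, y))"
          by (rule mult_right_mono[OF _ dT0]) simp
        also have "\<dots> \<le> max KT 0 * dual_mnorm (coprod S T) n F" by (rule mult_left_mono[OF dT]) simp
        finally have 2: "KT * dual_mnorm T n (\<lambda>a b y. F a b (0, y)) \<le> max KT 0 * dual_mnorm (coprod S T) n F" .
        show ?thesis using 1 2 kS kT by linarith
      qed
      also have "\<dots> = (max KS 0 + max KT 0) * dual_mnorm (coprod S T) n F" by (simp add: distrib_right)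
      finally show "bop_mnorm n (\<lambda>a b. Phi (F a b)) \<le> (max KS 0 + max KT 0) * dual_mnorm (coprod S T) n F" .
    qed
  next
    show "\<exists>c>0. \<forall>n\<ge>1. \<forall>F. dual_mat (coprod S T) n F \<longrightarrow>
          c * dual_mnorm (coprod S T) n F \<le> bop_mnorm n (\<lambda>a b. Phi (F a b))"
    proof (rule exI[of _ "min cS cT / 2"], intro conjI allI impI)
      show "0 < min cS cT / 2" using cS cT by simp
    next
      fix n :: nat and F assume n: "1 \<le> n" and F: "dual_mat (coprod S T) n F"
      let ?A = "\<lambda>a b. PS (\<lambda>x. F a b (x, 0))" and ?B = "\<lambda>a b. PT (\<lambda>y. F a b (0, y))"
      let ?dS = "dual_mnorm S n (\<lambda>a b x. F a b (x, 0))" and ?dT = "dual_mnorm T n (\<lambda>a b y. F a b (0, y))"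
      have Ab: "\<And>a b. a < n \<Longrightarrow> b < n \<Longrightarrow> ?A a b \<in> bop" by (rule entries_S[OF oS oT F S1])
      have Bb: "\<And>a b. a < n \<Longrightarrow> b < n \<Longrightarrow> ?B a b \<in> bop" by (rule entries_T[OF oS oT F T1])
      have FS: "dual_mat S n (\<lambda>a b x. F a b (x, 0))" by (rule dual_mat_S(1)[OF oS oT F])
      have FT: "dual_mat T n (\<lambda>a b y. F a b (0, y))" by (rule dual_mat_T(1)[OF oS oT F])
      have dS0: "0 \<le> ?dS" by (rule dual_mnorm_nonneg[OF oS FS])
      have dT0: "0 \<le> ?dT" by (rule dual_mnorm_nonneg[OF oT FT])
      have dC: "dual_mnorm (coprod S T) n F \<le> ?dS + ?dT" by (rule dual_coprod_le[OF oS oT F n])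
      have lS: "cS * ?dS \<le> bop_mnorm n ?A" using cS n FS by blast
      have lT: "cT * ?dT \<le> bop_mnorm n ?B" using cT n FT by blast
      have gA: "bop_mnorm n ?A \<le> bop_mnorm n (\<lambda>a b. Phi (F a b))"
        unfolding Phi_def by (rule Phi_mnorm_geA[of n ?A ?B, OF Ab Bb])
      have gB: "bop_mnorm n ?B \<le> bop_mnorm n (\<lambda>a b. Phi (F a b))"
        unfolding Phi_def by (rule Phi_mnorm_geB[of n ?A ?B, OF Ab Bb])
      have c0: "0 \<le> min cS cT / 2" using cS cT by simp
      have "min cS cT / 2 * dual_mnorm (coprod S T) n F \<le> min cS cT / 2 * (?dS + ?dT)"
        by (rule mult_left_mono[OF dC c0])
      also have "\<dots> = min cS cT / 2 * ?dS + min cS cT / 2 * ?dT" by (simp add: distrib_left)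
      also have "\<dots> \<le> cS / 2 * ?dS + cT / 2 * ?dT"
      proof -
        have "min cS cT / 2 * ?dS \<le> cS / 2 * ?dS" by (rule mult_right_mono[OF _ dS0]) simp
        moreover have "min cS cT / 2 * ?dT \<le> cT / 2 * ?dT" by (rule mult_right_mono[OF _ dT0]) simp
        ultimately show ?thesis by linarith
      qed
      also have "\<dots> \<le> bop_mnorm n (\<lambda>a b. Phi (F a b))" using lS lT gA gB by linarith
      finally show "min cS cT / 2 * dual_mnorm (coprod S T) n F \<le> bop_mnorm n (\<lambda>a b. Phi (F a b))" .
    qed
  next
    fix n :: nat and F assume n: "1 \<le> n" and F: "dual_mat (coprod S T) n F"
    let ?A = "\<lambda>a b. PS (\<lambda>x. F a b (x, 0))" and ?B = "\<lambda>a b. PT (\<lambda>y. F a b (0, y))"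
    have Ab: "\<And>a b. a < n \<Longrightarrow> b < n \<Longrightarrow> ?A a b \<in> bop" by (rule entries_S[OF oS oT F S1])
    have Bb: "\<And>a b. a < n \<Longrightarrow> b < n \<Longrightarrow> ?B a b \<in> bop" by (rule entries_T[OF oS oT F T1])
    have FS: "dual_mat S n (\<lambda>a b x. F a b (x, 0))" by (rule dual_mat_S(1)[OF oS oT F])
    have FT: "dual_mat T n (\<lambda>a b y. F a b (0, y))" by (rule dual_mat_T(1)[OF oS oT F])
    have pS: "dual_mpos S n (\<lambda>a b x. F a b (x, 0)) \<longleftrightarrow> bop_mpos n ?A" using S6 n FS by blast
    have pT: "dual_mpos T n (\<lambda>a b y. F a b (0, y)) \<longleftrightarrow> bop_mpos n ?B" using T6 n FT by blast
    have pC: "dual_mpos (coprod S T) n F \<longleftrightarrow> dual_mpos S n (\<lambda>a b x. F a b (x, 0)) \<and> dual_mpos T n (\<lambda>a b y. F a b (0, y))"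
      by (rule dual_mpos_coprod[OF oS oT F n])
    have pP: "bop_mpos n (\<lambda>a b. bdiag (?A a b) (?B a b)) \<longleftrightarrow> bop_mpos n ?A \<and> bop_mpos n ?B"
      by (rule Phi_pos[of n ?A ?B, OF Ab Bb])
    show "dual_mpos (coprod S T) n F \<longleftrightarrow> bop_mpos n (\<lambda>a b. Phi (F a b))"
      unfolding Phi_def pC pS pT pP ..
  qed
qed


end
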